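(* Assume the setting in the context (in particular $l=1$). Fix $\Lambda$ a bounded Borel subset of $\mathbb R^d$ and $\alpha\in(0,1]$. Then $$r(x+\varepsilon y,\gamma)^\alpha\to r(x,\gamma)^\alpha\quad\text{in }L^2\big(\Gamma\times\Lambda\times\mathbb R^d,\ \mu(d\gamma)\,dx\,dy\,a(y)\big)\ \text{ as }\varepsilon\to0.$$
   Context: $X=\mathbb R^d$ with Lebesgue measure; $\Gamma$ is the set of locally finite subsets of $\mathbb R^d$ with the vague topology and Borel $\sigma$-algebra. $K$ is a bounded self-adjoint nonnegative operator on the real space $L^2(\mathbb R^d,dx)$, locally of trace class, whose square root $\sqrt K$ has integral kernel $\varkappa(x-y)$ with $\varkappa$ a function on $\mathbb R^d$ satisfying $\lim_{y\to0}\int_{\mathbb R^d}(\varkappa(x)-\varkappa(x+y))^2dx=0$; $k(x,y)=\int\varkappa(x-z)\varkappa(y-z)dz$. The function $a:\mathbb R^d\to[0,\infty)$ is bounded, measurable, integrable, compactly supported and radial ($a(x)=\tilde a(|x|)$). $Y$ is a measurable random field on $(\Omega,\mathcal A,\mathbb P)$ with $Y(x)$ centered Gaussian and $\mathbb E(Y(x)Y(y))=k(x,y)$; $\mu=\mu^{(1)}(d\gamma)=\int_\Omega\mathbb P(d\omega)\pi_{Y(x,\omega)^2dx}(d\gamma)$ is the Cox process ($\pi_{g\,dx}$ the Poisson point process with intensity $g(x)dx$), and $r(x,\gamma)=\widetilde{\mathbb E}(Y(x)^2\mid\mathcal F)(\gamma)$ is its Papangelou intensity, with $\widetilde{\mathbb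 P}(d\omega,d\gamma)=\mathbb P(d\omega)\pi_{Y(x,\omega)^2dx}(d\gamma)$ and $\mathcal F$ the $\sigma$-algebra generated by $(\omega,\gamma)\mapsto F(\gamma)$. *)

theory Defs
  imports "HOL-Probability.Probability"
begin

definition locfin :: "'a::euclidean_space set \<Rightarrow> bool" where
  "locfin \<gamma> \<longleftrightarrow> (\<forall>R::real. finite (\<gamma> \<inter> cball 0 R))"

text \<open>The configuration space Gamma with its Borel sigma-algebra (vague topology), which is
  generated by the counting maps gamma |-> card (gamma \<inter> B), B bounded Borel.\<close>
definition Gamma :: "'a::euclidean_space set measure" where
  "Gamma = sigma (Collect locfin)
     {{\<gamma>. locfin \<gamma> \<and> card (\<gamma> \<inter> B) = n} | B n. B \<in> sets lborel \<and> bounded B}"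

text \<open>The operator sqrt K: f |-> (x |-> integral kappa(x - z) f(z) dz).\<close>
definition conv_op :: "('a::euclidean_space \<Rightarrow> real) \<Rightarrow> ('a \<Rightarrow> real) \<Rightarrow> 'a \<Rightarrow> real" where
  "conv_op \<kappa> f x = (LINT z|lborel. \<kappa> (x - z) * f z)"

definition sq_int :: "('a::euclidean_space \<Rightarrow> real) \<Rightarrow> bool" where
  "sq_int f \<longleftrightarrow> f \<in> borel_measurable lborel \<and> integrable lborel (\<lambda>x. (f x)\<^sup>2)"

text \<open>Standing assumptions on kappa: sqrt K (integral operator with kernel kappa(x-y)) is a
  bounded, self-adjoint, nonnegative operator on real L2; K = (sqrt K)^2 is locally of
  trace class, which (for K = A^2, A self-adjoint with kernel kappa(x-y)) amounts to
  kappa being square integrable; and the L2-continuity of translations.\<close>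
definition kernel_ok :: "('a::euclidean_space \<Rightarrow> real) \<Rightarrow> bool" where
  "kernel_ok \<kappa> \<longleftrightarrow>
     sq_int \<kappa> \<and>
     (\<exists>C. \<forall>f. sq_int f \<longrightarrow> sq_int (conv_op \<kappa> f) \<and>
          (LINT x|lborel. (conv_op \<kappa> f x)\<^sup>2) \<le> C * (LINT x|lborel. (f x)\<^sup>2)) \<and>
     (\<forall>f g. sq_int f \<longrightarrow> sq_int g \<longrightarrow>
          (LINT x|lborel. conv_op \<kappa> f x * g x) = (LINT x|lborel. f x * conv_op \<kappa> g x)) \<and>
     (\<forall>f. sq_int f \<longrightarrow> (LINT x|lborel. conv_op \<kappa> f x * f x) \<ge> 0) \<and>
     ((\<lambda>y. LINT x|lborel. (\<kappa> x - \<kappa> (x + y))\<^sup>2) \<longlongrightarrow> 0) (at 0)"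

definition kcov :: "('a::euclidean_space \<Rightarrow> real) \<Rightarrow> 'a \<Rightarrow> 'a \<Rightarrow> real" where
  "kcov \<kappa> x y = (LINT z|lborel. \<kappa> (x - z) * \<kappa> (y - z))"

definition weight_ok :: "('a::euclidean_space \<Rightarrow> real) \<Rightarrow> bool" where
  "weight_ok a \<longleftrightarrow> a \<in> borel_measurable lborel \<and> (\<forall>x. a x \<ge> 0) \<and> bounded (range a) \<and>
     integrable lborel a \<and> bounded {x. a x \<noteq> 0} \<and> (\<exists>ta::real \<Rightarrow> real. \<forall>x. a x = ta (norm x))"

text \<open>Y is a measurable, centered Gaussian random field with covariance k:
  every finite linear combination is centered normal (possibly degenerate)
  with the prescribed variance (characterised via characteristic functions).\<close>
definition gaussian_field ::
  "'w measure \<Rightarrow> ('a::euclidean_space \<Rightarrow> 'w \<Rightarrow> real) \<Rightarrow> ('a \<Rightarrow> 'a \<Rightarrow> real) \<Rightarrow> bool" where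
  "gaussian_field P Y k \<longleftrightarrow> prob_space P \<and>
     (\<lambda>(x, \<omega>). Y x \<omega>) \<in> borel_measurable (lborel \<Otimes>\<^sub>M P) \<and>
     (\<forall>(n::nat) (xs::nat \<Rightarrow> 'a) (c::nat \<Rightarrow> real) t.
        char (distr P borel (\<lambda>\<omega>. \<Sum>i<n. c i * Y (xs i) \<omega>)) t =
        complex_of_real (exp (- (\<Sum>i<n. \<Sum>j<n. c i * c j * k (xs i) (xs j)) * t\<^sup>2 / 2)))"

definition poisson_prob :: "real \<Rightarrow> nat \<Rightarrow> real" where
  "poisson_prob m n = exp (- m) * m ^ n / fact n"

text \<open>Pt is the joint law P(d omega) pi_{Y(x,omega)^2 dx}(d gamma) on Omega x Gamma: for every
  event A of Omega and pairwise disjoint bounded Borel sets B_0..B_{m-1}, the probability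
  that omega \<in> A and gamma has n_i points in B_i equals the P-integral over A of the
  product of Poisson probabilities with means integral_{B_i} Y(x,omega)^2 dx.\<close>
definition cox_joint ::
  "'w measure \<Rightarrow> ('a::euclidean_space \<Rightarrow> 'w \<Rightarrow> real) \<Rightarrow> ('w \<times> 'a set) measure \<Rightarrow> bool" where
  "cox_joint P Y Pt \<longleftrightarrow> sets Pt = sets (P \<Otimes>\<^sub>M Gamma) \<and>
     (\<forall>A (m::nat) (B::nat \<Rightarrow> 'a set) (n::nat \<Rightarrow> nat).
        A \<in> sets P \<longrightarrow> (\<forall>i<m. B i \<in> sets lborel \<and> bounded (B i)) \<longrightarrow>
        disjoint_family_on B {..<m} \<longrightarrow>
        emeasure Pt (A \<times> {\<gamma>\<in>space Gamma. \<forall>i<m. card (\<gamma> \<inter> B i) = n i}) =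
        (\<integral>\<^sup>+\<omega>\<in>A. ennreal (\<Prod>i<m. poisson_prob (LINT x:B i|lborel. (Y x \<omega>)\<^sup>2) (n i)) \<partial>P))"

text \<open>r is (a jointly measurable, nonnegative version of) the Papangelou intensity
  r(x,gamma) = E~(Y(x)^2 | F)(gamma), for almost every x.\<close>
definition papangelou ::
  "('w \<times> 'a::euclidean_space set) measure \<Rightarrow> ('a \<Rightarrow> 'w \<Rightarrow> real) \<Rightarrow> ('a \<Rightarrow> 'a set \<Rightarrow> real) \<Rightarrow> bool" where
  "papangelou Pt Y r \<longleftrightarrow>
     (\<lambda>(x, \<gamma>). r x \<gamma>) \<in> borel_measurable (lborel \<Otimes>\<^sub>M Gamma) \<and> (\<forall>x \<gamma>. r x \<gamma> \<ge> 0) \<and>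
     (AE x in lborel. \<forall>S\<in>sets Gamma.
        (\<integral>\<^sup>+p. indicator S (snd p) * ennreal ((Y x (fst p))\<^sup>2) \<partial>Pt) =
        (\<integral>\<^sup>+p. indicator S (snd p) * ennreal (r x (snd p)) \<partial>Pt))"

end

theory Submission
  imports Defs
begin


definition Dtr :: "('a::euclidean_space \<Rightarrow> real) \<Rightarrow> 'a \<Rightarrow> ennreal" where
  "Dtr g h = (\<integral>\<^sup>+x. ennreal ((g (x + h) - g x)\<^sup>2) \<partial>lborel)"

definition TC :: "('a::euclidean_space \<Rightarrow> real) \<Rightarrow> bool" where
  "TC g \<longleftrightarrow> g \<in> borel_measurable borel \<and> (\<integral>\<^sup>+x. ennreal ((g x)\<^sup>2) \<partial>lborel) < \<infinity> \<and>
     ((Dtr g \<longlongrightarrow> 0) (at 0))"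

lemma nn_integral_lborel_translate:
  fixes c :: "'a::euclidean_space"
  assumes [measurable]: "f \<in> borel_measurable borel"
  shows "(\<integral>\<^sup>+x. f (x + c) \<partial>lborel) = (\<integral>\<^sup>+x. f x \<partial>lborel)"
proof -
  have "(\<integral>\<^sup>+x. f x \<partial>lborel) = (\<integral>\<^sup>+x. f x \<partial>distr lborel borel ((+) c))"
    by (simp add: lborel_distr_plus)
  also have "\<dots> = (\<integral>\<^sup>+x. f (c + x) \<partial>lborel)"
    by (subst nn_integral_distr) auto
  finally show ?thesis by (simp add: add.commute)
qed

lemma sq_diff_le: "((u::real) - v)\<^sup>2 \<le> 2 * u\<^sup>2 + 2 * v\<^sup>2"
  using zero_le_power2[of "u+v"] by (simp add: power2_eq_square algebra_simps)

lemma sq_add_le: "((u::real) + v)\<^sup>2 \<le> 2 * u\<^sup>2 + 2 * v\<^sup>2"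
  using sq_diff_le[of u "-v"] by simp

lemma sq_add3_le: "((u::real) + v + w)\<^sup>2 \<le> 3 * u\<^sup>2 + 3 * v\<^sup>2 + 3 * w\<^sup>2"
  using zero_le_power2[of "u-v"] zero_le_power2[of "u-w"] zero_le_power2[of "v-w"]
  by (simp add: power2_eq_square algebra_simps)

lemma ennreal_2sq: "ennreal (2 * (a::real)\<^sup>2 + 2 * b\<^sup>2) = 2 * ennreal (a\<^sup>2) + 2 * ennreal (b\<^sup>2)"
  by (subst ennreal_plus) (auto simp: ennreal_mult)

lemma Dtr_le:
  fixes g :: "'a::euclidean_space \<Rightarrow> real"
  assumes [measurable]: "g \<in> borel_measurable borel"
  shows "Dtr g h \<le> 4 * (\<integral>\<^sup>+x. ennreal ((g x)\<^sup>2) \<partial>lborel)"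
proof -
  have "Dtr g h \<le> (\<integral>\<^sup>+x. 2 * ennreal ((g (x + h))\<^sup>2) + 2 * ennreal ((g x)\<^sup>2) \<partial>lborel)"
    unfolding Dtr_def
    by (intro nn_integral_mono) (metis ennreal_2sq ennreal_leI sq_diff_le)
  also have "\<dots> = 2 * (\<integral>\<^sup>+x. ennreal ((g (x + h))\<^sup>2) \<partial>lborel) + 2 * (\<integral>\<^sup>+x. ennreal ((g x)\<^sup>2) \<partial>lborel)"
    by (simp add: nn_integral_add nn_integral_cmult)
  also have "(\<integral>\<^sup>+x. ennreal ((g (x + h))\<^sup>2) \<partial>lborel) = (\<integral>\<^sup>+x. ennreal ((g x)\<^sup>2) \<partial>lborel)"
    by (rule nn_integral_lborel_translate[where f="\<lambda>x. ennreal ((g x)\<^sup>2)"]) simp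
  finally show ?thesis
    by (simp add: distrib_right[symmetric] mult.commute)
qed

lemma ennreal_3sq: "ennreal (3 * (a::real)\<^sup>2 + 3 * b\<^sup>2 + 3 * c\<^sup>2) = 3 * ennreal (a\<^sup>2) + 3 * ennreal (b\<^sup>2) + 3 * ennreal (c\<^sup>2)"
  by (subst ennreal_plus, simp, simp)+ (auto simp: ennreal_mult)

lemma Dtr_add_le:
  fixes f g :: "'a::euclidean_space \<Rightarrow> real"
  assumes [measurable]: "f \<in> borel_measurable borel" "g \<in> borel_measurable borel"
  shows "Dtr (\<lambda>x. f x + g x) h \<le> 2 * Dtr f h + 2 * Dtr g h"
proof -
  have "Dtr (\<lambda>x. f x + g x) h \<le> (\<integral>\<^sup>+x. 2 * ennreal ((f (x + h) - f x)\<^sup>2) + 2 * ennreal ((g (x + h) - g x)\<^sup>2) \<partial>lborel)"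
    unfolding Dtr_def
    apply (intro nn_integral_mono)
    subgoal for x
      using sq_add_le[of "f (x + h) - f x" "g (x + h) - g x"]
      by (metis (no_types, lifting) add_diff_add ennreal_2sq ennreal_leI)
    done
  also have "\<dots> = 2 * Dtr f h + 2 * Dtr g h"
    unfolding Dtr_def by (simp add: nn_integral_add nn_integral_cmult)
  finally show ?thesis .
qed

lemma sq_int_add_le:
  fixes f g :: "'a::euclidean_space \<Rightarrow> real"
  assumes [measurable]: "f \<in> borel_measurable borel" "g \<in> borel_measurable borel"
  shows "(\<integral>\<^sup>+x. ennreal ((f x + g x)\<^sup>2) \<partial>lborel) \<le> 2 * (\<integral>\<^sup>+x. ennreal ((f x)\<^sup>2) \<partial>lborel) + 2 * (\<integral>\<^sup>+x. ennreal ((g x)\<^sup>2) \<partial>lborel)"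
proof -
  have "(\<integral>\<^sup>+x. ennreal ((f x + g x)\<^sup>2) \<partial>lborel) \<le> (\<integral>\<^sup>+x. 2 * ennreal ((f x)\<^sup>2) + 2 * ennreal ((g x)\<^sup>2) \<partial>lborel)"
    by (intro nn_integral_mono) (metis ennreal_2sq ennreal_leI sq_add_le)
  also have "\<dots> = 2 * (\<integral>\<^sup>+x. ennreal ((f x)\<^sup>2) \<partial>lborel) + 2 * (\<integral>\<^sup>+x. ennreal ((g x)\<^sup>2) \<partial>lborel)"
    by (simp add: nn_integral_add nn_integral_cmult)
  finally show ?thesis .
qed

lemma TC_add:
  assumes "TC f" "TC g"
  shows "TC (\<lambda>x. f x + g x)"
proof -
  have [measurable]: "f \<in> borel_measurable borel" "g \<in> borel_measurable borel"
    using assms by (auto simp: TC_def)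
  have "(\<integral>\<^sup>+x. ennreal ((f x + g x)\<^sup>2) \<partial>lborel) < \<infinity>"
    using sq_int_add_le[of f g] assms
    by (auto simp: TC_def ennreal_mult_less_top top.not_eq_extremum intro: le_less_trans)
  moreover have "(Dtr (\<lambda>x. f x + g x) \<longlongrightarrow> 0) (at 0)"
  proof (rule tendsto_sandwich[of "\<lambda>_. 0" _ _ "\<lambda>h. 2 * Dtr f h + 2 * Dtr g h"])
    have "((\<lambda>h. 2 * Dtr f h + 2 * Dtr g h) \<longlongrightarrow> 2 * 0 + 2 * 0) (at 0)"
      by (intro tendsto_add ennreal_tendsto_cmult) (use assms in \<open>auto simp: TC_def\<close>)
    then show "((\<lambda>h. 2 * Dtr f h + 2 * Dtr g h) \<longlongrightarrow> 0) (at 0)"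
      by simp
  qed (auto simp: Dtr_add_le)
  ultimately show ?thesis by (simp add: TC_def)
qed

lemma TC_scale:
  assumes "TC f"
  shows "TC (\<lambda>x. c * f x)"
proof -
  have [measurable]: "f \<in> borel_measurable borel"
    using assms by (auto simp: TC_def)
  have e1: "(\<integral>\<^sup>+x. ennreal ((c * f x)\<^sup>2) \<partial>lborel) = ennreal (c\<^sup>2) * (\<integral>\<^sup>+x. ennreal ((f x)\<^sup>2) \<partial>lborel)"
    by (subst nn_integral_cmult[symmetric]) (auto simp: power_mult_distrib ennreal_mult)
  have e2: "Dtr (\<lambda>x. c * f x) h = ennreal (c\<^sup>2) * Dtr f h" for h
    unfolding Dtr_def
    by (subst nn_integral_cmult[symmetric]) (auto simp: power_mult_distrib ennreal_mult right_diff_distrib[symmetric])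
  show ?thesis
    using assms unfolding TC_def e1 e2
    using ennreal_tendsto_cmult[of "ennreal (c\<^sup>2)" "Dtr f" 0 "at 0"]
    by (auto simp: ennreal_mult_less_top)
qed

lemma TC_zero: "TC (\<lambda>x::'a::euclidean_space. 0)"
proof -
  have "Dtr (\<lambda>x::'a. 0::real) = (\<lambda>h. 0)" by (simp add: fun_eq_iff Dtr_def)
  then show ?thesis by (simp add: TC_def)
qed

lemma TC_sum:
  assumes "finite I" "\<And>i. i \<in> I \<Longrightarrow> TC (f i)"
  shows "TC (\<lambda>x. \<Sum>i\<in>I. f i x)"
  using assms
proof (induction I rule: finite_induct)
  case empty
  then show ?case by (simp add: TC_zero)
next
  case (insert i I)
  then show ?case
    using TC_add[of "f i" "\<lambda>x. \<Sum>i\<in>I. f i x"] by simp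
qed

lemma Dtr_approx_le:
  fixes g u :: "'a::euclidean_space \<Rightarrow> real"
  assumes [measurable]: "g \<in> borel_measurable borel" "u \<in> borel_measurable borel"
  shows "Dtr g h \<le> 6 * (\<integral>\<^sup>+x. ennreal ((g x - u x)\<^sup>2) \<partial>lborel) + 3 * Dtr u h"
proof -
  let ?E = "\<integral>\<^sup>+x. ennreal ((g x - u x)\<^sup>2) \<partial>lborel"
  have "Dtr g h \<le> (\<integral>\<^sup>+x. 3 * ennreal ((g (x + h) - u (x + h))\<^sup>2) + 3 * ennreal ((u (x + h) - u x)\<^sup>2)
       + 3 * ennreal ((g x - u x)\<^sup>2) \<partial>lborel)"
    unfolding Dtr_def
    apply (intro nn_integral_mono)
    subgoal for x
      using sq_add3_le[of "g (x + h) - u (x + h)" "u (x + h) - u x" "u x - g x"]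
        ennreal_3sq[of "g (x + h) - u (x + h)" "u (x + h) - u x" "u x - g x"]
      by (smt (verit) ennreal_leI power2_commute)
    done
  also have "\<dots> = 3 * (\<integral>\<^sup>+x. ennreal ((g (x + h) - u (x + h))\<^sup>2) \<partial>lborel) + 3 * Dtr u h + 3 * ?E"
    unfolding Dtr_def by (simp add: nn_integral_add nn_integral_cmult)
  also have "(\<integral>\<^sup>+x. ennreal ((g (x + h) - u (x + h))\<^sup>2) \<partial>lborel) = ?E"
    by (rule nn_integral_lborel_translate[where f="\<lambda>x. ennreal ((g x - u x)\<^sup>2)"]) simp
  finally have "Dtr g h \<le> 3 * ?E + 3 * Dtr u h + 3 * ?E" .
  moreover have "(3::ennreal) * ?E + 3 * ?E = 6 * ?E"
    using distrib_right[of "3::ennreal" 3 ?E] by simp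
  ultimately show ?thesis
    by (simp add: add_ac)
qed

lemma ennreal_numeral_mult: "0 \<le> c \<Longrightarrow> (numeral n::ennreal) * ennreal c = ennreal (numeral n * c)"
  by (subst ennreal_mult) auto

lemma ennreal_tendsto_0_iff:
  fixes f :: "'b \<Rightarrow> ennreal"
  shows "(f \<longlongrightarrow> 0) F \<longleftrightarrow> (\<forall>e>0. eventually (\<lambda>x. f x < ennreal e) F)"
proof
  assume "(f \<longlongrightarrow> 0) F"
  then show "\<forall>e>0. eventually (\<lambda>x. f x < ennreal e) F"
    by (auto simp: order_tendsto_iff)
next
  assume *: "\<forall>e>0. eventually (\<lambda>x. f x < ennreal e) F"
  show "(f \<longlongrightarrow> 0) F"
    unfolding order_tendsto_iff
  proof safe
    fix a :: ennreal assume "0 < a"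
    then obtain e where "0 < e" "ennreal e \<le> a"
      by (metis dual_order.strict_implies_order ennreal_le_epsilon ennreal_less_top not_le zero_less_divide_1_iff
          ennreal_less_zero_iff ennreal_enn2real_if less_imp_le less_numeral_extra(1) top.extremum_strict)
    with * show "eventually (\<lambda>x. f x < a) F"
      by (auto elim!: eventually_mono)
  qed auto
qed

lemma TC_limit:
  fixes g :: "'a::euclidean_space \<Rightarrow> real"
  assumes [measurable]: "g \<in> borel_measurable borel"
    and g2: "(\<integral>\<^sup>+x. ennreal ((g x)\<^sup>2) \<partial>lborel) < \<infinity>"
    and u: "\<And>n. TC (u n)"
    and lim: "(\<lambda>n. \<integral>\<^sup>+x. ennreal ((g x - u n x)\<^sup>2) \<partial>lborel) \<longlonglongrightarrow> 0"
  shows "TC g"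
proof -
  have "(Dtr g \<longlongrightarrow> 0) (at 0)"
    unfolding ennreal_tendsto_0_iff
  proof safe
    fix e :: real assume "0 < e"
    then have "0 < e / 12" by simp
    from lim[unfolded ennreal_tendsto_0_iff, rule_format, OF this]
    obtain n where n: "(\<integral>\<^sup>+x. ennreal ((g x - u n x)\<^sup>2) \<partial>lborel) < ennreal (e / 12)"
      by (auto simp: eventually_sequentially)
    have [measurable]: "u n \<in> borel_measurable borel" using u by (auto simp: TC_def)
    have "eventually (\<lambda>h. Dtr (u n) h < ennreal (e / 6)) (at 0)"
      using u[of n] \<open>0 < e\<close> unfolding TC_def ennreal_tendsto_0_iff by auto
    then show "eventually (\<lambda>h. Dtr g h < ennreal e) (at 0)"
    proof (rule eventually_mono)
      fix h assume h: "Dtr (u n) h < ennreal (e / 6)"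
      have "Dtr g h \<le> 6 * (\<integral>\<^sup>+x. ennreal ((g x - u n x)\<^sup>2) \<partial>lborel) + 3 * Dtr (u n) h"
        by (rule Dtr_approx_le) auto
      also have "\<dots> < 6 * ennreal (e / 12) + 3 * ennreal (e / 6)"
        by (intro add_strict_mono ennreal_mult_strict_left_mono n h) auto
      also have "\<dots> = ennreal e"
        using \<open>0 < e\<close> by (simp only: ennreal_numeral_mult) (subst ennreal_plus[symmetric], auto)
      finally show "Dtr g h < ennreal e" .
    qed
  qed
  then show ?thesis using g2 by (simp add: TC_def)
qed


lemma tendsto_at_seqI:
  fixes f :: "'a::first_countable_topology \<Rightarrow> 'b::topological_space"
  assumes "\<And>X. X \<longlonglongrightarrow> x \<Longrightarrow> (\<lambda>n. f (X n)) \<longlonglongrightarrow> l"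
  shows "(f \<longlongrightarrow> l) (at x)"
  unfolding tendsto_at_iff_sequentially using assms by (auto simp: comp_def)

lemma indicator_sq: "(indicator A x :: real)\<^sup>2 = indicator A x"
  by (simp add: indicator_def)

lemma TC_box: "TC (indicator (box a b) :: 'a::euclidean_space \<Rightarrow> real)"
proof -
  let ?I = "indicator (box a b) :: 'a \<Rightarrow> real"
  have fin: "(\<integral>\<^sup>+x. ennreal ((?I x)\<^sup>2) \<partial>lborel) < \<infinity>"
  proof -
    have eq: "(\<lambda>x. ennreal ((?I x)\<^sup>2)) = indicator (box a b)"
      by (auto simp: fun_eq_iff indicator_def)
    have "emeasure lborel (box a b) < \<top>"
      using emeasure_lborel_box_finite[of a b] by (metis infinity_ennreal_def)
    then show ?thesis by (simp only: eq) simp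
  qed
  obtain R where R: "\<And>x. x \<in> box a b \<Longrightarrow> norm x \<le> R"
    using bounded_box[of a b] unfolding bounded_pos by blast
  have null: "cbox a b - box a b \<in> null_sets lborel"
  proof -
    have "emeasure lborel (cbox a b - box a b) = emeasure lborel (cbox a b) - emeasure lborel (box a b)"
      by (intro emeasure_Diff) (auto simp: emeasure_lborel_cbox_eq emeasure_lborel_box_eq box_subset_cbox)
    also have "\<dots> = 0"
      by (simp add: emeasure_lborel_cbox_eq emeasure_lborel_box_eq)
    finally show ?thesis by auto
  qed
  have "(Dtr ?I \<longlongrightarrow> 0) (at 0)"
  proof (rule tendsto_at_seqI)
    fix X :: "nat \<Rightarrow> 'a" assume X: "X \<longlonglongrightarrow> 0"
    then obtain B where B: "\<And>n. norm (X n) \<le> B"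
      using convergent_imp_bounded[of X] by (auto simp: bounded_iff convergent_def)
    have w: "(\<integral>\<^sup>+x. indicator (cball 0 (R + B)) (x::'a) \<partial>lborel) < \<infinity>"
        using emeasure_bounded_finite[of "cball (0::'a) (R + B)"] by simp
      have bnd: "AE x in lborel. ennreal ((?I (x + X n) - ?I x)\<^sup>2) \<le> indicator (cball 0 (R + B)) x" for n
      proof (rule AE_I2)
        fix x
        show "ennreal ((?I (x + X n) - ?I x)\<^sup>2) \<le> indicator (cball 0 (R + B)) x"
        proof (cases "x \<in> cball 0 (R + B)")
          case False
          then have "x \<notin> box a b" "x + X n \<notin> box a b"
          proof -
            have nx: "R + B < norm x" using False by simp
            show "x \<notin> box a b" using R[of x] nx B[of n] norm_ge_zero[of "X n"] by linarith
            show "x + X n \<notin> box a b"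
            proof
              assume "x + X n \<in> box a b"
              then have "norm (x + X n) \<le> R" using R by blast
              moreover have "norm x \<le> norm (x + X n) + norm (X n)"
                using norm_triangle_ineq4[of "x + X n" "X n"] by simp
              ultimately show False using nx B[of n] by linarith
            qed
          qed
          then show ?thesis by simp
        qed (auto simp: indicator_def)
      qed
      have lim: "AE x in lborel. (\<lambda>n. ennreal ((?I (x + X n) - ?I x)\<^sup>2)) \<longlonglongrightarrow> 0"
        using AE_not_in[OF null]
      proof (rule AE_mp[OF _ AE_I2], intro impI)
        fix x assume x: "x \<notin> cbox a b - box a b"
        have xX: "(\<lambda>n. x + X n) \<longlonglongrightarrow> x"
          using tendsto_add[OF tendsto_const X, of x] by simp
        show "(\<lambda>n. ennreal ((?I (x + X n) - ?I x)\<^sup>2)) \<longlonglongrightarrow> 0"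
        proof (cases "x \<in> box a b")
          case True
          then have "eventually (\<lambda>n. x + X n \<in> box a b) sequentially"
            using topological_tendstoD[OF xX open_box] by blast
          then have "eventually (\<lambda>n. ennreal ((?I (x + X n) - ?I x)\<^sup>2) = 0) sequentially"
            by (rule eventually_mono) (use True in simp)
          then show ?thesis by (rule tendsto_eventually)
        next
          case False
          then have "x \<in> - cbox a b" using x by auto
          then have "eventually (\<lambda>n. x + X n \<in> - cbox a b) sequentially"
            using topological_tendstoD[OF xX, of "- cbox a b"] closed_cbox[of a b] by (simp add: open_Compl)
          then have "eventually (\<lambda>n. ennreal ((?I (x + X n) - ?I x)\<^sup>2) = 0) sequentially"
            by (rule eventually_mono) (use False box_subset_cbox in \<open>auto simp: indicator_def\<close>)
          then show ?thesis by (rule tendsto_eventually)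
        qed
      qed
    have "(\<lambda>n. \<integral>\<^sup>+x. ennreal ((?I (x + X n) - ?I x)\<^sup>2) \<partial>lborel) \<longlonglongrightarrow> (\<integral>\<^sup>+(x::'a). 0 \<partial>lborel)"
    proof (rule nn_integral_dominated_convergence[where w="indicator (cball 0 (R + B))"])
      show "\<And>j. AE x in lborel. ennreal ((?I (x + X j) - ?I x)\<^sup>2) \<le> indicator (cball 0 (R + B)) x"
        by (rule bnd)
      show "(\<integral>\<^sup>+x. indicator (cball 0 (R + B)) (x::'a) \<partial>lborel) < \<infinity>" using w by simp
      show "AE x in lborel. (\<lambda>n. ennreal ((?I (x + X n) - ?I x)\<^sup>2)) \<longlonglongrightarrow> 0" by (rule lim)
    qed (measurable, simp add: pred_def borel_closed)
    then show "(\<lambda>n. Dtr ?I (X n)) \<longlonglongrightarrow> 0"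
      by (simp add: Dtr_def)
  qed
  then show ?thesis
    using fin by (simp add: TC_def)
qed


lemma sum_indicator_disjoint:
  assumes "disjoint_family A"
  shows "(\<Sum>i<(n::nat). indicator (A i \<inter> K) x :: real) = indicator ((\<Union>i<n. A i) \<inter> K) x"
proof (induction n)
  case 0
  then show ?case by simp
next
  case (Suc n)
  have d: "x \<in> A n \<Longrightarrow> i < n \<Longrightarrow> x \<notin> A i" for i
    using assms unfolding disjoint_family_on_def by (metis IntI UNIV_I empty_iff less_irrefl)
  have "(\<Sum>i<Suc n. indicator (A i \<inter> K) x :: real) = indicator ((\<Union>i<n. A i) \<inter> K) x + indicator (A n \<inter> K) x"
    using Suc by simp
  also have "\<dots> = indicator ((\<Union>i<Suc n. A i) \<inter> K) x"
    using d by (auto simp: indicator_def lessThan_Suc)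
  finally show ?case .
qed

lemma TC_borel_box:
  fixes c d :: "'a::euclidean_space"
  assumes "A \<in> sets borel"
  shows "TC (indicator (A \<inter> box c d) :: 'a \<Rightarrow> real)"
proof -
  let ?K = "box c d"
  let ?G = "range (\<lambda>(a, b). box a b :: 'a set)"
  have boxG: "box p q \<in> ?G" for p q :: 'a
    by (metis (mono_tags, lifting) case_prod_conv rangeI)
  have sb: "sigma_sets UNIV ?G = sets borel"
    by (simp add: borel_eq_box)
  have "Int_stable ?G"
    unfolding Int_stable_def using boxG by (auto simp: box_Int_box)
  moreover have "?G \<subseteq> Pow UNIV" by auto
  moreover have "A \<in> sigma_sets UNIV ?G" using assms sb by simp
  ultimately show ?thesis
  proof (induction rule: sigma_sets_induct_disjoint)
    case (basic A)
    then obtain a b where "A = box a b" by auto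
    then show ?case
      by (simp add: box_Int_box TC_box)
  next
    case empty
    have "indicator ({} \<inter> ?K) = (\<lambda>x::'a. 0::real)" by (simp add: fun_eq_iff)
    then show ?case by (simp add: TC_zero)
  next
    case (compl A)
    have "indicator ((UNIV - A) \<inter> ?K) = (\<lambda>x::'a. indicator ?K x + (-1) * indicator (A \<inter> ?K) x :: real)"
      by (auto simp: fun_eq_iff indicator_def)
    then show ?case
      using TC_add[OF TC_box TC_scale[OF compl.IH, of "-1"]] by simp
  next
    case (union A)
    have Ab[measurable]: "A i \<in> sets borel" for i
      using union.hyps sb by auto
    have Ab'[measurable]: "A i \<in> sets lborel" for i
      using Ab by simp
    have Kb[measurable]: "?K \<in> sets lborel" by simp
    let ?g = "indicator ((\<Union>i. A i) \<inter> ?K) :: 'a \<Rightarrow> real"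
    define u where "u n x = (\<Sum>i<n. indicator (A i \<inter> ?K) x :: real)" for n x
    have u_eq: "u n x = indicator ((\<Union>i<n. A i) \<inter> ?K) x" for n x
      unfolding u_def by (rule sum_indicator_disjoint[OF union.hyps(1)])
    have um[measurable]: "u n \<in> borel_measurable lborel" for n
      unfolding u_def by measurable
    have TCu: "TC (u n)" for n
      unfolding u_def by (rule TC_sum) (auto intro: union.IH)
    have gm[measurable]: "?g \<in> borel_measurable borel" by measurable
    have Kfin: "(\<integral>\<^sup>+x. indicator ?K x \<partial>lborel) < \<infinity>"
      using emeasure_lborel_box_finite[of c d] by simp
    have g2: "(\<integral>\<^sup>+x. ennreal ((?g x)\<^sup>2) \<partial>lborel) < \<infinity>"
    proof -
      have "(\<integral>\<^sup>+x. ennreal ((?g x)\<^sup>2) \<partial>lborel) \<le> (\<integral>\<^sup>+x. indicator ?K x \<partial>lborel)"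
        by (intro nn_integral_mono) (auto simp: indicator_def)
      then show ?thesis using Kfin by (simp add: le_less_trans)
    qed
    have lim: "(\<lambda>n. \<integral>\<^sup>+x. ennreal ((?g x - u n x)\<^sup>2) \<partial>lborel) \<longlonglongrightarrow> (\<integral>\<^sup>+(x::'a). 0 \<partial>lborel)"
    proof (rule nn_integral_dominated_convergence[where w="indicator ?K"])
      show "(\<integral>\<^sup>+x. indicator ?K x \<partial>lborel) < \<infinity>" by (rule Kfin)
      show "AE x in lborel. ennreal ((?g x - u n x)\<^sup>2) \<le> indicator ?K x" for n
        by (rule AE_I2) (auto simp: u_eq indicator_def)
      show "AE x in lborel. (\<lambda>n. ennreal ((?g x - u n x)\<^sup>2)) \<longlonglongrightarrow> 0"
      proof (rule AE_I2)
        fix x :: 'a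
        have "eventually (\<lambda>n. ennreal ((?g x - u n x)\<^sup>2) = 0) sequentially"
        proof (cases "x \<in> (\<Union>i. A i) \<inter> ?K")
          case True
          then obtain j where j: "x \<in> A j" "x \<in> ?K" by auto
          show ?thesis
            unfolding eventually_sequentially
            by (rule exI[of _ "Suc j"]) (use j True in \<open>auto simp: u_eq indicator_def\<close>)
        next
          case False
          then show ?thesis by (auto simp: u_eq indicator_def)
        qed
        then show "(\<lambda>n. ennreal ((?g x - u n x)\<^sup>2)) \<longlonglongrightarrow> 0"
          by (rule tendsto_eventually)
      qed
    qed measurable
    have "TC ?g"
      by (rule TC_limit[OF gm g2 TCu]) (use lim in simp)
    then show ?case by simp
  qed
qed

lemma simple_sum_repr:
  assumes "finite (f ` UNIV)"
  shows "(\<Sum>v\<in>f ` UNIV. v * indicator (f -` {v} \<inter> K) x :: real) = f x * indicator K x"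
proof -
  have "(\<Sum>v\<in>f ` UNIV. v * indicator (f -` {v} \<inter> K) x :: real) =
        (\<Sum>v\<in>f ` UNIV. if v = f x then f x * indicator K x else 0)"
    by (intro sum.cong) (auto simp: indicator_def)
  also have "\<dots> = f x * indicator K x"
    using assms by (simp add: sum.delta')
  finally show ?thesis .
qed

lemma TC_supp:
  fixes g :: "'a::euclidean_space \<Rightarrow> real"
  assumes gm[measurable]: "g \<in> borel_measurable borel"
    and fin: "(\<integral>\<^sup>+x. ennreal ((g x)\<^sup>2) \<partial>lborel) < \<infinity>"
    and supp: "\<And>x. x \<notin> box c d \<Longrightarrow> g x = 0"
  shows "TC g"
proof -
  let ?K = "box c d"
  obtain F where F: "\<And>i. simple_function borel (F i)" "\<And>x. (\<lambda>i. F i x) \<longlonglongrightarrow> g x"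
      "\<And>i x. dist (F i x) 0 \<le> 2 * dist (g x) 0"
    using borel_measurable_implies_sequence_metric[OF gm, of 0] by auto
  define u where "u i x = F i x * indicator ?K x" for i x
  have Fm[measurable]: "F i \<in> borel_measurable borel" for i
    using F(1) by (rule borel_measurable_simple_function)
  have um[measurable]: "u i \<in> borel_measurable lborel" for i
    unfolding u_def by measurable
  have TCu: "TC (u i)" for i
  proof -
    have fin: "finite (F i ` UNIV)"
      using F(1)[of i] by (simp add: simple_function_def)
    have "u i = (\<lambda>x. \<Sum>v\<in>F i ` UNIV. v * indicator (F i -` {v} \<inter> ?K) x)"
      unfolding u_def using simple_sum_repr[OF fin] by auto
    moreover have "TC (\<lambda>x. \<Sum>v\<in>F i ` UNIV. v * indicator (F i -` {v} \<inter> ?K) x)"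
    proof (rule TC_sum[OF fin])
      fix v
      have "F i -` {v} \<in> sets borel"
        using simple_functionD(2)[OF F(1)[of i], of "{v}"] by simp
      then show "TC (\<lambda>x. v * indicator (F i -` {v} \<inter> ?K) x)"
        by (intro TC_scale TC_borel_box)
    qed
    ultimately show ?thesis by simp
  qed
  have g9: "(\<integral>\<^sup>+x. ennreal (9 * (g x)\<^sup>2) \<partial>lborel) < \<infinity>"
  proof -
    have "(\<integral>\<^sup>+x. ennreal (9 * (g x)\<^sup>2) \<partial>lborel) = 9 * (\<integral>\<^sup>+x. ennreal ((g x)\<^sup>2) \<partial>lborel)"
      by (subst nn_integral_cmult[symmetric]) (auto simp: ennreal_mult)
    then show ?thesis using fin by (simp add: ennreal_mult_less_top)
  qed
  have lim: "(\<lambda>n. \<integral>\<^sup>+x. ennreal ((g x - u n x)\<^sup>2) \<partial>lborel) \<longlonglongrightarrow> (\<integral>\<^sup>+(x::'a). 0 \<partial>lborel)"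
  proof (rule nn_integral_dominated_convergence[where w="\<lambda>x. ennreal (9 * (g x)\<^sup>2)"])
    show "(\<integral>\<^sup>+x. ennreal (9 * (g x)\<^sup>2) \<partial>lborel) < \<infinity>" by (rule g9)
    show "AE x in lborel. ennreal ((g x - u n x)\<^sup>2) \<le> ennreal (9 * (g x)\<^sup>2)" for n
    proof (rule AE_I2, rule ennreal_leI)
      fix x
      have "\<bar>u n x\<bar> \<le> 2 * \<bar>g x\<bar>"
        using F(3)[of n x] by (auto simp: u_def indicator_def)
      then have "\<bar>g x - u n x\<bar> \<le> 3 * \<bar>g x\<bar>" by linarith
      then have "\<bar>g x - u n x\<bar>\<^sup>2 \<le> (3 * \<bar>g x\<bar>)\<^sup>2"
        by (intro power_mono) auto
      then show "(g x - u n x)\<^sup>2 \<le> 9 * (g x)\<^sup>2"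
        by (simp add: power_mult_distrib)
    qed
    show "AE x in lborel. (\<lambda>n. ennreal ((g x - u n x)\<^sup>2)) \<longlonglongrightarrow> 0"
    proof (rule AE_I2)
      fix x
      have "(\<lambda>n. u n x) \<longlonglongrightarrow> g x * indicator ?K x"
        unfolding u_def by (intro tendsto_intros F(2))
      also have "g x * indicator ?K x = g x"
        using supp[of x] by (auto simp: indicator_def)
      finally have "(\<lambda>n. (g x - u n x)\<^sup>2) \<longlonglongrightarrow> (g x - g x)\<^sup>2"
        by (intro tendsto_intros)
      then have "(\<lambda>n. ennreal ((g x - u n x)\<^sup>2)) \<longlonglongrightarrow> ennreal ((g x - g x)\<^sup>2)"
        by (rule tendsto_ennrealI)
      then show "(\<lambda>n. ennreal ((g x - u n x)\<^sup>2)) \<longlonglongrightarrow> 0" by simp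
    qed
  qed measurable
  show "TC g"
    by (rule TC_limit[OF gm fin TCu]) (use lim in simp)
qed

lemma TC_bounded_supp:
  fixes g :: "'a::euclidean_space \<Rightarrow> real"
  assumes "g \<in> borel_measurable borel"
    and "(\<integral>\<^sup>+x. ennreal ((g x)\<^sup>2) \<partial>lborel) < \<infinity>"
    and "bounded S" "\<And>x. x \<notin> S \<Longrightarrow> g x = 0"
  shows "TC g"
proof -
  obtain a where "S \<subseteq> box (-a) a"
    using bounded_subset_box_symmetric[OF assms(3)] by blast
  then show ?thesis
    using assms by (intro TC_supp[where c="-a" and d=a]) auto
qed


lemma cond_identity:
  fixes V :: "'p \<Rightarrow> real" and R :: "'g \<Rightarrow> real"
  assumes s[measurable]: "s \<in> measurable Q G"
    and V[measurable]: "V \<in> borel_measurable Q" and R[measurable]: "R \<in> borel_measurable G"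
    and eq: "\<And>S. S \<in> sets G \<Longrightarrow> (\<integral>\<^sup>+p. indicator S (s p) * ennreal (V p) \<partial>Q) = (\<integral>\<^sup>+p. indicator S (s p) * ennreal (R (s p)) \<partial>Q)"
    and h[measurable]: "h \<in> borel_measurable G"
  shows "(\<integral>\<^sup>+p. h (s p) * ennreal (V p) \<partial>Q) = (\<integral>\<^sup>+p. h (s p) * ennreal (R (s p)) \<partial>Q)"
proof -
  let ?N1 = "distr (density Q (\<lambda>p. ennreal (V p))) G s"
  let ?N2 = "distr (density Q (\<lambda>p. ennreal (R (s p)))) G s"
  have N: "?N1 = ?N2"
  proof (rule measure_eqI)
    show "sets ?N1 = sets ?N2" by simp
    fix S assume "S \<in> sets ?N1"
    then have S[measurable]: "S \<in> sets G" by simp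
    have "emeasure ?N1 S = (\<integral>\<^sup>+p. ennreal (V p) * indicator (s -` S \<inter> space Q) p \<partial>Q)"
      by (simp add: emeasure_distr emeasure_density)
    also have "\<dots> = (\<integral>\<^sup>+p. indicator S (s p) * ennreal (V p) \<partial>Q)"
      by (intro nn_integral_cong) (auto simp: indicator_def)
    also have "\<dots> = (\<integral>\<^sup>+p. indicator S (s p) * ennreal (R (s p)) \<partial>Q)"
      by (rule eq[OF S])
    also have "\<dots> = (\<integral>\<^sup>+p. ennreal (R (s p)) * indicator (s -` S \<inter> space Q) p \<partial>Q)"
      by (intro nn_integral_cong) (auto simp: indicator_def)
    also have "\<dots> = emeasure ?N2 S"
      by (simp add: emeasure_distr emeasure_density)
    finally show "emeasure ?N1 S = emeasure ?N2 S" .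
  qed
  have "(\<integral>\<^sup>+p. h (s p) * ennreal (V p) \<partial>Q) = integral\<^sup>N ?N1 h"
    by (simp add: nn_integral_distr nn_integral_density mult.commute)
  also have "\<dots> = integral\<^sup>N ?N2 h" by (simp only: N)
  also have "\<dots> = (\<integral>\<^sup>+p. h (s p) * ennreal (R (s p)) \<partial>Q)"
    by (simp add: nn_integral_distr nn_integral_density mult.commute)
  finally show ?thesis .
qed

lemma cond_sq_bound:
  fixes V :: "'p \<Rightarrow> real" and R :: "'g \<Rightarrow> real"
  assumes s[measurable]: "s \<in> measurable Q G"
    and V[measurable]: "V \<in> borel_measurable Q" and R[measurable]: "R \<in> borel_measurable G"
    and Vnn: "\<And>p. 0 \<le> V p" and Rnn: "\<And>g. 0 \<le> R g"
    and fin: "emeasure Q (space Q) < \<infinity>"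
    and eq: "\<And>S. S \<in> sets G \<Longrightarrow> (\<integral>\<^sup>+p. indicator S (s p) * ennreal (V p) \<partial>Q) = (\<integral>\<^sup>+p. indicator S (s p) * ennreal (R (s p)) \<partial>Q)"
  shows "(\<integral>\<^sup>+p. ennreal ((R (s p))\<^sup>2) \<partial>Q) \<le> (\<integral>\<^sup>+p. ennreal ((V p)\<^sup>2) \<partial>Q)"
proof -
  let ?I2 = "\<integral>\<^sup>+p. ennreal ((V p)\<^sup>2) \<partial>Q"
  define m where "m n g = min (R g) (real n)" for n g
  have mm[measurable]: "m n \<in> borel_measurable G" for n unfolding m_def by measurable
  have m_nn: "0 \<le> m n g" for n g using Rnn by (simp add: m_def)
  have bound: "(\<integral>\<^sup>+p. ennreal ((m n (s p))\<^sup>2) \<partial>Q) \<le> ?I2" for n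
  proof -
    let ?I1 = "\<integral>\<^sup>+p. ennreal ((m n (s p))\<^sup>2) \<partial>Q"
    have I1fin: "?I1 < \<infinity>"
    proof -
      have "?I1 \<le> (\<integral>\<^sup>+p. ennreal ((real n)\<^sup>2) \<partial>Q)"
        by (intro nn_integral_mono ennreal_leI power_mono) (auto simp: m_def m_nn Rnn)
      also have "\<dots> = ennreal ((real n)\<^sup>2) * emeasure Q (space Q)"
        by simp
      also have "\<dots> < \<infinity>" using fin by (simp add: ennreal_mult_less_top)
      finally show ?thesis .
    qed
    have "?I1 \<le> (\<integral>\<^sup>+p. ennreal (m n (s p)) * ennreal (R (s p)) \<partial>Q)"
    proof (intro nn_integral_mono)
      fix p
      have "(m n (s p))\<^sup>2 \<le> m n (s p) * R (s p)"
        unfolding power2_eq_square by (intro mult_left_mono) (auto simp: m_def m_nn Rnn)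
      then show "ennreal ((m n (s p))\<^sup>2) \<le> ennreal (m n (s p)) * ennreal (R (s p))"
        by (subst ennreal_mult[symmetric]) (auto simp: m_nn Rnn intro: ennreal_leI)
    qed
    also have "\<dots> = (\<integral>\<^sup>+p. ennreal (m n (s p)) * ennreal (V p) \<partial>Q)"
      by (rule cond_identity[OF s V R eq, where h="\<lambda>g. ennreal (m n g)", symmetric]) auto
    finally have A: "?I1 \<le> (\<integral>\<^sup>+p. ennreal (m n (s p)) * ennreal (V p) \<partial>Q)" .
    have "2 * (\<integral>\<^sup>+p. ennreal (m n (s p)) * ennreal (V p) \<partial>Q) = (\<integral>\<^sup>+p. 2 * (ennreal (m n (s p)) * ennreal (V p)) \<partial>Q)"
      by (simp add: nn_integral_cmult)
    also have "\<dots> \<le> (\<integral>\<^sup>+p. ennreal ((m n (s p))\<^sup>2) + ennreal ((V p)\<^sup>2) \<partial>Q)"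
    proof (intro nn_integral_mono)
      fix p
      have "2 * (m n (s p) * V p) \<le> (m n (s p))\<^sup>2 + (V p)\<^sup>2"
        using zero_le_power2[of "m n (s p) - V p"] by (simp add: power2_eq_square algebra_simps)
      then have "ennreal (2 * (m n (s p) * V p)) \<le> ennreal ((m n (s p))\<^sup>2 + (V p)\<^sup>2)"
        by (rule ennreal_leI)
      moreover have "ennreal (2 * (m n (s p) * V p)) = 2 * (ennreal (m n (s p)) * ennreal (V p))"
        using m_nn[of n "s p"] Vnn[of p] by (simp add: ennreal_mult)
      moreover have "ennreal ((m n (s p))\<^sup>2 + (V p)\<^sup>2) = ennreal ((m n (s p))\<^sup>2) + ennreal ((V p)\<^sup>2)"
        by (simp add: ennreal_plus)
      ultimately show "2 * (ennreal (m n (s p)) * ennreal (V p)) \<le> ennreal ((m n (s p))\<^sup>2) + ennreal ((V p)\<^sup>2)"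
        by simp
    qed
    also have "\<dots> = ?I1 + ?I2"
      by (simp add: nn_integral_add)
    finally have B: "2 * (\<integral>\<^sup>+p. ennreal (m n (s p)) * ennreal (V p) \<partial>Q) \<le> ?I1 + ?I2" .
    have "?I1 + ?I1 \<le> ?I1 + ?I2"
      using order_trans[OF mult_left_mono[OF A, of 2] B] by (simp add: mult_2)
    then show ?thesis
      using I1fin by (auto simp: ennreal_add_left_cancel_le)
  qed
  have sup: "(\<integral>\<^sup>+p. ennreal ((R (s p))\<^sup>2) \<partial>Q) = (SUP n. \<integral>\<^sup>+p. ennreal ((m n (s p))\<^sup>2) \<partial>Q)"
  proof -
    have inc: "incseq (\<lambda>n p. ennreal ((m n (s p))\<^sup>2))"
      by (auto simp: incseq_def le_fun_def m_def m_nn Rnn intro!: ennreal_leI power_mono)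
    have pt: "(SUP n. ennreal ((m n (s p))\<^sup>2)) = ennreal ((R (s p))\<^sup>2)" for p
    proof (rule LIMSEQ_unique[OF LIMSEQ_SUP])
      show "incseq (\<lambda>n. ennreal ((m n (s p))\<^sup>2))"
        using inc by (auto simp: incseq_def le_fun_def)
      obtain N :: nat where "R (s p) \<le> real N" using real_arch_simple by blast
      then have "eventually (\<lambda>n. ennreal ((m n (s p))\<^sup>2) = ennreal ((R (s p))\<^sup>2)) sequentially"
        unfolding eventually_sequentially
        by (intro exI[of _ N]) (auto simp: m_def min_def)
      then show "(\<lambda>n. ennreal ((m n (s p))\<^sup>2)) \<longlonglongrightarrow> ennreal ((R (s p))\<^sup>2)"
        by (rule tendsto_eventually)
    qed
    have "(SUP n. \<integral>\<^sup>+p. ennreal ((m n (s p))\<^sup>2) \<partial>Q) = (\<integral>\<^sup>+p. (SUP n. ennreal ((m n (s p))\<^sup>2)) \<partial>Q)"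
      by (rule nn_integral_monotone_convergence_SUP[symmetric]) (use inc in auto)
    then show ?thesis by (simp add: pt)
  qed
  show ?thesis
    unfolding sup by (rule SUP_least) (rule bound)
qed

lemma std_normal_4th: "(\<integral>\<^sup>+z. ennreal (z ^ 4) \<partial>std_normal_distribution) = 3"
proof -
  have hb: "has_bochner_integral lborel (\<lambda>x. std_normal_density x * x ^ 4) 3"
    using std_normal_moment_even[of 2] by (simp add: fact_numeral)
  have "(\<integral>\<^sup>+z. ennreal (z ^ 4) \<partial>std_normal_distribution) = (\<integral>\<^sup>+z. ennreal (std_normal_density z) * ennreal (z ^ 4) \<partial>lborel)"
    by (subst nn_integral_density) auto
  also have "\<dots> = (\<integral>\<^sup>+z. ennreal (std_normal_density z * z ^ 4) \<partial>lborel)"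
    by (intro nn_integral_cong) (simp add: ennreal_mult normal_density_nonneg)
  also have "\<dots> = ennreal 3"
    using hb by (subst nn_integral_eq_integral) (auto simp: has_bochner_integral_iff normal_density_nonneg)
  finally show ?thesis by simp
qed

lemma char_return0: "char (return borel (0::real)) t = 1"
  unfolding char_def by (simp add: integral_return)

lemma gauss_fourth:
  fixes Z :: "'w \<Rightarrow> real"
  assumes P: "prob_space P" and Zm[measurable]: "Z \<in> borel_measurable P"
    and ch: "\<And>c t. char (distr P borel (\<lambda>\<omega>. c * Z \<omega>)) t = complex_of_real (exp (- (c * c * v) * t\<^sup>2 / 2))"
    and v: "0 \<le> v"
  shows "(\<integral>\<^sup>+\<omega>. ennreal ((Z \<omega>) ^ 4) \<partial>P) = ennreal (3 * v\<^sup>2)"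
proof (cases "v = 0")
  case True
  interpret prob_space P by (rule P)
  have ch1: "char (distr P borel Z) = char (return borel (0::real))"
    using ch[of 1] True by (simp add: fun_eq_iff char_return0)
  have D: "distr P borel Z = return borel 0"
  proof (rule Levy_uniqueness)
    show "real_distribution (return borel (0::real))"
      by (simp add: real_distribution_def real_distribution_axioms_def prob_space_return)
    show "real_distribution (distr P borel Z)" by (rule real_distribution_distr) simp
  qed (rule ch1)
  have "(\<integral>\<^sup>+\<omega>. ennreal ((Z \<omega>) ^ 4) \<partial>P) = (\<integral>\<^sup>+z. ennreal (z ^ 4) \<partial>distr P borel Z)"
    by (subst nn_integral_distr) auto
  also have "\<dots> = 0" unfolding D by (simp add: nn_integral_return)
  finally show ?thesis using True by simp
next
  case False
  interpret prob_space P by (rule P)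
  have vp: "0 < v" using False v by simp
  define c where "c = 1 / sqrt v"
  have cc: "c * c * v = 1" using vp by (simp add: c_def)
  have "char (distr P borel (\<lambda>\<omega>. c * Z \<omega>)) = char std_normal_distribution"
    using ch[of c] cc by (simp add: fun_eq_iff char_std_normal_distribution)
  then have D: "distr P borel (\<lambda>\<omega>. c * Z \<omega>) = std_normal_distribution"
    by (intro Levy_uniqueness real_dist_normal_dist) (auto intro!: real_distribution_distr)
  have "(\<integral>\<^sup>+\<omega>. ennreal ((c * Z \<omega>) ^ 4) \<partial>P) = (\<integral>\<^sup>+z. ennreal (z ^ 4) \<partial>distr P borel (\<lambda>\<omega>. c * Z \<omega>))"
    by (subst nn_integral_distr) auto
  also have "\<dots> = 3" unfolding D by (rule std_normal_4th)
  finally have c4: "(\<integral>\<^sup>+\<omega>. ennreal ((c * Z \<omega>) ^ 4) \<partial>P) = 3" .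
  have "(\<integral>\<^sup>+\<omega>. ennreal ((Z \<omega>) ^ 4) \<partial>P) = (\<integral>\<^sup>+\<omega>. ennreal (v\<^sup>2) * ennreal ((c * Z \<omega>) ^ 4) \<partial>P)"
  proof (intro nn_integral_cong)
    fix \<omega>
    have "v\<^sup>2 * (c * Z \<omega>) ^ 4 = (v * (c * c)) ^ 2 * (Z \<omega>) ^ 4"
      by (simp add: power_mult_distrib power2_eq_square power4_eq_xxxx)
    also have "v * (c * c) = 1" using cc by (simp add: mult_ac)
    finally have "(Z \<omega>) ^ 4 = v\<^sup>2 * (c * Z \<omega>) ^ 4" by simp
    then show "ennreal ((Z \<omega>) ^ 4) = ennreal (v\<^sup>2) * ennreal ((c * Z \<omega>) ^ 4)"
      by (simp add: ennreal_mult zero_le_even_power)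
  qed
  also have "\<dots> = ennreal (v\<^sup>2) * 3"
    by (simp add: nn_integral_cmult c4)
  finally show ?thesis by (simp add: ennreal_mult mult.commute)
qed


lemma shift_bound:
  fixes G :: "'a::euclidean_space \<Rightarrow> real" and a :: "'a \<Rightarrow> real" and \<epsilon> :: real
  assumes [measurable]: "G \<in> borel_measurable borel" "a \<in> borel_measurable borel"
    and ann: "\<And>y. 0 \<le> a y" and Gnn: "\<And>z. 0 \<le> G z"
    and [measurable]: "B \<in> sets borel" "\<Lambda> \<in> sets borel"
    and sub: "\<And>x y. x \<in> \<Lambda> \<Longrightarrow> a y \<noteq> 0 \<Longrightarrow> x + \<epsilon> *\<^sub>R y \<in> B"
  shows "(\<integral>\<^sup>+x\<in>\<Lambda>. (\<integral>\<^sup>+y. ennreal (a y * G (x + \<epsilon> *\<^sub>R y)) \<partial>lborel) \<partial>lborel)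
         \<le> (\<integral>\<^sup>+y. ennreal (a y) \<partial>lborel) * (\<integral>\<^sup>+z\<in>B. ennreal (G z) \<partial>lborel)"
proof -
  let ?K = "\<integral>\<^sup>+z\<in>B. ennreal (G z) \<partial>lborel"
  have "(\<integral>\<^sup>+x\<in>\<Lambda>. (\<integral>\<^sup>+y. ennreal (a y * G (x + \<epsilon> *\<^sub>R y)) \<partial>lborel) \<partial>lborel)
      = (\<integral>\<^sup>+x. (\<integral>\<^sup>+y. ennreal (a y * G (x + \<epsilon> *\<^sub>R y)) * indicator \<Lambda> x \<partial>lborel) \<partial>lborel)"
    by (simp add: nn_integral_multc)
  also have "\<dots> = (\<integral>\<^sup>+y. (\<integral>\<^sup>+x. ennreal (a y * G (x + \<epsilon> *\<^sub>R y)) * indicator \<Lambda> x \<partial>lborel) \<partial>lborel)"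
    by (rule lborel_pair.Fubini'[symmetric]) measurable
  also have "\<dots> \<le> (\<integral>\<^sup>+y. ennreal (a y) * (\<integral>\<^sup>+x. ennreal (G (x + \<epsilon> *\<^sub>R y)) * indicator B (x + \<epsilon> *\<^sub>R y) \<partial>lborel) \<partial>lborel)"
  proof (intro nn_integral_mono)
    fix y :: 'a
    have "(\<integral>\<^sup>+x. ennreal (a y * G (x + \<epsilon> *\<^sub>R y)) * indicator \<Lambda> x \<partial>lborel)
        \<le> (\<integral>\<^sup>+x. ennreal (a y) * (ennreal (G (x + \<epsilon> *\<^sub>R y)) * indicator B (x + \<epsilon> *\<^sub>R y)) \<partial>lborel)"
    proof (intro nn_integral_mono)
      fix x :: 'a
      show "ennreal (a y * G (x + \<epsilon> *\<^sub>R y)) * indicator \<Lambda> x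
          \<le> ennreal (a y) * (ennreal (G (x + \<epsilon> *\<^sub>R y)) * indicator B (x + \<epsilon> *\<^sub>R y))"
      proof (cases "x \<in> \<Lambda> \<and> a y \<noteq> 0")
        case True
        then have "x + \<epsilon> *\<^sub>R y \<in> B" using sub by blast
        then show ?thesis using True ann[of y] Gnn by (simp add: ennreal_mult)
      next
        case False
        then show ?thesis by (auto simp: indicator_def)
      qed
    qed
    also have "\<dots> = ennreal (a y) * (\<integral>\<^sup>+x. ennreal (G (x + \<epsilon> *\<^sub>R y)) * indicator B (x + \<epsilon> *\<^sub>R y) \<partial>lborel)"
      by (rule nn_integral_cmult) measurable
    finally show "(\<integral>\<^sup>+x. ennreal (a y * G (x + \<epsilon> *\<^sub>R y)) * indicator \<Lambda> x \<partial>lborel)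
        \<le> ennreal (a y) * (\<integral>\<^sup>+x. ennreal (G (x + \<epsilon> *\<^sub>R y)) * indicator B (x + \<epsilon> *\<^sub>R y) \<partial>lborel)" .
  qed
  also have "\<dots> = (\<integral>\<^sup>+y. ennreal (a y) * ?K \<partial>lborel)"
  proof (intro nn_integral_cong)
    fix y :: 'a
    have "(\<integral>\<^sup>+x. ennreal (G (x + \<epsilon> *\<^sub>R y)) * indicator B (x + \<epsilon> *\<^sub>R y) \<partial>lborel) = ?K"
      by (rule nn_integral_lborel_translate[where f="\<lambda>z. ennreal (G z) * indicator B z"]) measurable
    then show "ennreal (a y) * (\<integral>\<^sup>+x. ennreal (G (x + \<epsilon> *\<^sub>R y)) * indicator B (x + \<epsilon> *\<^sub>R y) \<partial>lborel) = ennreal (a y) * ?K"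
      by simp
  qed
  also have "\<dots> = (\<integral>\<^sup>+y. ennreal (a y) \<partial>lborel) * ?K"
    by (rule nn_integral_multc) measurable
  finally show ?thesis .
qed

lemma loc_bound:
  fixes F :: "'a::euclidean_space \<Rightarrow> 'g \<Rightarrow> real"
  assumes mu: "prob_space \<mu>"
    and Fm[measurable]: "(\<lambda>(x, \<gamma>). F x \<gamma>) \<in> borel_measurable (lborel \<Otimes>\<^sub>M \<mu>)"
    and mom: "AE x in lborel. (\<integral>\<^sup>+\<gamma>. ennreal ((F x \<gamma>)\<^sup>2) \<partial>\<mu>) \<le> ennreal M"
    and B[measurable]: "B \<in> sets borel"
  shows "(\<integral>\<^sup>+\<gamma>. (\<integral>\<^sup>+x\<in>B. ennreal ((F x \<gamma>)\<^sup>2) \<partial>lborel) \<partial>\<mu>) \<le> ennreal M * emeasure lborel B"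
proof -
  interpret mu: prob_space \<mu> by (rule mu)
  interpret pair_sigma_finite lborel \<mu> ..
  have "(\<integral>\<^sup>+\<gamma>. (\<integral>\<^sup>+x\<in>B. ennreal ((F x \<gamma>)\<^sup>2) \<partial>lborel) \<partial>\<mu>)
      = (\<integral>\<^sup>+x. (\<integral>\<^sup>+\<gamma>. ennreal ((F x \<gamma>)\<^sup>2) * indicator B x \<partial>\<mu>) \<partial>lborel)"
    by (rule Fubini'[where f="\<lambda>x \<gamma>. ennreal ((F x \<gamma>)\<^sup>2) * indicator B x"]) measurable
  also have "\<dots> = (\<integral>\<^sup>+x. (\<integral>\<^sup>+\<gamma>. ennreal ((F x \<gamma>)\<^sup>2) \<partial>\<mu>) * indicator B x \<partial>lborel)"
    by (intro nn_integral_cong nn_integral_multc) measurable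
  also have "\<dots> \<le> (\<integral>\<^sup>+x. ennreal M * indicator B x \<partial>lborel)"
    by (rule nn_integral_mono_AE) (use mom in \<open>eventually_elim, auto intro: mult_right_mono\<close>)
  also have "\<dots> = ennreal M * emeasure lborel B"
    by (simp add: nn_integral_cmult)
  finally show ?thesis .
qed

lemma diff_bound:
  fixes G :: "'a::euclidean_space \<Rightarrow> real" and a :: "'a \<Rightarrow> real" and \<epsilon> :: real
  assumes [measurable]: "G \<in> borel_measurable borel" "a \<in> borel_measurable borel"
    and ann: "\<And>y. 0 \<le> a y" and [measurable]: "\<Lambda> \<in> sets borel"
  shows "(\<integral>\<^sup>+x\<in>\<Lambda>. (\<integral>\<^sup>+y. ennreal (a y * (G (x + \<epsilon> *\<^sub>R y) - G x)\<^sup>2) \<partial>lborel) \<partial>lborel)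
         \<le> (\<integral>\<^sup>+y. ennreal (a y) * Dtr G (\<epsilon> *\<^sub>R y) \<partial>lborel)"
proof -
  have "(\<integral>\<^sup>+x\<in>\<Lambda>. (\<integral>\<^sup>+y. ennreal (a y * (G (x + \<epsilon> *\<^sub>R y) - G x)\<^sup>2) \<partial>lborel) \<partial>lborel)
      = (\<integral>\<^sup>+x. (\<integral>\<^sup>+y. ennreal (a y * (G (x + \<epsilon> *\<^sub>R y) - G x)\<^sup>2) * indicator \<Lambda> x \<partial>lborel) \<partial>lborel)"
    by (simp add: nn_integral_multc)
  also have "\<dots> = (\<integral>\<^sup>+y. (\<integral>\<^sup>+x. ennreal (a y * (G (x + \<epsilon> *\<^sub>R y) - G x)\<^sup>2) * indicator \<Lambda> x \<partial>lborel) \<partial>lborel)"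
    by (rule lborel_pair.Fubini'[symmetric]) measurable
  also have "\<dots> \<le> (\<integral>\<^sup>+y. ennreal (a y) * Dtr G (\<epsilon> *\<^sub>R y) \<partial>lborel)"
  proof (intro nn_integral_mono)
    fix y :: 'a
    have "(\<integral>\<^sup>+x. ennreal (a y * (G (x + \<epsilon> *\<^sub>R y) - G x)\<^sup>2) * indicator \<Lambda> x \<partial>lborel)
        \<le> (\<integral>\<^sup>+x. ennreal (a y) * ennreal ((G (x + \<epsilon> *\<^sub>R y) - G x)\<^sup>2) \<partial>lborel)"
      by (intro nn_integral_mono) (auto simp: indicator_def ennreal_mult ann)
    also have "\<dots> = ennreal (a y) * Dtr G (\<epsilon> *\<^sub>R y)"
      unfolding Dtr_def by (rule nn_integral_cmult) measurable
    finally show "(\<integral>\<^sup>+x. ennreal (a y * (G (x + \<epsilon> *\<^sub>R y) - G x)\<^sup>2) * indicator \<Lambda> x \<partial>lborel)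
        \<le> ennreal (a y) * Dtr G (\<epsilon> *\<^sub>R y)" .
  qed
  finally show ?thesis .
qed


lemma main_abstract:
  fixes F :: "'a::euclidean_space \<Rightarrow> 'g \<Rightarrow> real" and a :: "'a \<Rightarrow> real" and \<mu> :: "'g measure"
  assumes mu: "prob_space \<mu>"
    and Fm[measurable]: "(\<lambda>(x, \<gamma>). F x \<gamma>) \<in> borel_measurable (lborel \<Otimes>\<^sub>M \<mu>)"
    and mom: "AE x in lborel. (\<integral>\<^sup>+\<gamma>. ennreal ((F x \<gamma>)\<^sup>2) \<partial>\<mu>) \<le> ennreal M"
    and am[measurable]: "a \<in> borel_measurable borel" and ann: "\<And>y. 0 \<le> a y"
    and aint: "(\<integral>\<^sup>+y. ennreal (a y) \<partial>lborel) < \<infinity>"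
    and asupp: "\<And>y. a y \<noteq> 0 \<Longrightarrow> norm y \<le> Ra"
    and Lm[measurable]: "\<Lambda> \<in> sets borel" and Lb: "\<And>x. x \<in> \<Lambda> \<Longrightarrow> norm x \<le> Rl"
  shows "(\<forall>\<epsilon>::real. (\<integral>\<^sup>+\<gamma>. (\<integral>\<^sup>+x\<in>\<Lambda>. (\<integral>\<^sup>+y.
             ennreal (a y * (F (x + \<epsilon> *\<^sub>R y) \<gamma>)\<^sup>2) \<partial>lborel) \<partial>lborel) \<partial>\<mu>) < \<infinity>)"
proof -
  interpret mu: prob_space \<mu> by (rule mu)
  have Fm'[measurable]: "(\<lambda>(\<gamma>, x). F x \<gamma>) \<in> borel_measurable (\<mu> \<Otimes>\<^sub>M lborel)"
    using measurable_pair_swap[OF Fm] by simp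
  have Fsec[measurable]: "(\<lambda>z. F z \<gamma>) \<in> borel_measurable borel" if "\<gamma> \<in> space \<mu>" for \<gamma>
  proof -
    have "(\<lambda>z. F z \<gamma>) \<in> borel_measurable lborel"
      using measurable_comp[OF measurable_Pair2'[OF that] Fm] by (simp add: comp_def)
    then show ?thesis by simp
  qed
  have ballm[measurable]: "ball (0::'a) r \<in> sets borel" for r by simp
  let ?Na = "\<integral>\<^sup>+y. ennreal (a y) \<partial>lborel"
  let ?K = "\<lambda>\<rho> \<gamma>. \<integral>\<^sup>+z\<in>ball 0 \<rho>. ennreal ((F z \<gamma>)\<^sup>2) \<partial>lborel"
  have LB: "(\<integral>\<^sup>+\<gamma>. ?K \<rho> \<gamma> \<partial>\<mu>) < \<infinity>" for \<rho>
  proof -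
    have "(\<integral>\<^sup>+\<gamma>. ?K \<rho> \<gamma> \<partial>\<mu>) \<le> ennreal M * emeasure lborel (ball (0::'a) \<rho>)"
      by (rule loc_bound[OF mu Fm mom]) simp
    also have "\<dots> < \<infinity>"
      using emeasure_bounded_finite[of "ball (0::'a) \<rho>"] by (simp add: ennreal_mult_less_top)
    finally show ?thesis .
  qed
  show ?thesis
  proof
    fix \<epsilon> :: real
    let ?\<rho> = "Rl + \<bar>\<epsilon>\<bar> * \<bar>Ra\<bar> + 1"
    have sub: "x + \<epsilon> *\<^sub>R y \<in> ball 0 ?\<rho>" if "x \<in> \<Lambda>" "a y \<noteq> 0" for x y :: 'a
    proof -
      have "norm (x + \<epsilon> *\<^sub>R y) \<le> norm x + \<bar>\<epsilon>\<bar> * norm y"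
        using norm_triangle_ineq[of x "\<epsilon> *\<^sub>R y"] by simp
      also have "\<dots> \<le> Rl + \<bar>\<epsilon>\<bar> * \<bar>Ra\<bar>"
        using Lb[OF that(1)] asupp[OF that(2)] by (intro add_mono mult_left_mono) auto
      finally show ?thesis by simp
    qed
    have "(\<integral>\<^sup>+\<gamma>. (\<integral>\<^sup>+x\<in>\<Lambda>. (\<integral>\<^sup>+y. ennreal (a y * (F (x + \<epsilon> *\<^sub>R y) \<gamma>)\<^sup>2) \<partial>lborel) \<partial>lborel) \<partial>\<mu>)
        \<le> (\<integral>\<^sup>+\<gamma>. ?Na * ?K ?\<rho> \<gamma> \<partial>\<mu>)"
    proof (intro nn_integral_mono)
      fix \<gamma> assume \<gamma>: "\<gamma> \<in> space \<mu>"
      show "(\<integral>\<^sup>+x\<in>\<Lambda>. (\<integral>\<^sup>+y. ennreal (a y * (F (x + \<epsilon> *\<^sub>R y) \<gamma>)\<^sup>2) \<partial>lborel) \<partial>lborel) \<le> ?Na * ?K ?\<rho> \<gamma>"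
        by (rule shift_bound[where G="\<lambda>z. (F z \<gamma>)\<^sup>2"]) (use \<gamma> sub ann in auto)
    qed
    also have "\<dots> = ?Na * (\<integral>\<^sup>+\<gamma>. ?K ?\<rho> \<gamma> \<partial>\<mu>)"
      by (rule nn_integral_cmult) measurable
    also have "\<dots> < \<infinity>"
      using aint LB by (simp add: ennreal_mult_less_top)
    finally show "(\<integral>\<^sup>+\<gamma>. (\<integral>\<^sup>+x\<in>\<Lambda>. (\<integral>\<^sup>+y. ennreal (a y * (F (x + \<epsilon> *\<^sub>R y) \<gamma>)\<^sup>2) \<partial>lborel) \<partial>lborel) \<partial>\<mu>) < \<infinity>" .
  qed
qed

lemma ennreal_2_2_4: "2 * (x::ennreal) + 2 * x = 4 * x"
  using distrib_right[of "2::ennreal" 2 x] by simp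

lemma main_lim:
  fixes F :: "'a::euclidean_space \<Rightarrow> 'g \<Rightarrow> real" and a :: "'a \<Rightarrow> real" and \<mu> :: "'g measure"
  assumes mu: "prob_space \<mu>"
    and Fm[measurable]: "(\<lambda>(x, \<gamma>). F x \<gamma>) \<in> borel_measurable (lborel \<Otimes>\<^sub>M \<mu>)"
    and mom: "AE x in lborel. (\<integral>\<^sup>+\<gamma>. ennreal ((F x \<gamma>)\<^sup>2) \<partial>\<mu>) \<le> ennreal M"
    and am[measurable]: "a \<in> borel_measurable borel" and ann: "\<And>y. 0 \<le> a y"
    and aint: "(\<integral>\<^sup>+y. ennreal (a y) \<partial>lborel) < \<infinity>"
    and asupp: "\<And>y. a y \<noteq> 0 \<Longrightarrow> norm y \<le> Ra"
    and Lm[measurable]: "\<Lambda> \<in> sets borel" and Lb: "\<And>x. x \<in> \<Lambda> \<Longrightarrow> norm x \<le> Rl"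
  shows "((\<lambda>\<epsilon>::real. \<integral>\<^sup>+\<gamma>. (\<integral>\<^sup>+x\<in>\<Lambda>. (\<integral>\<^sup>+y.
             ennreal (a y * (F (x + \<epsilon> *\<^sub>R y) \<gamma> - F x \<gamma>)\<^sup>2) \<partial>lborel) \<partial>lborel) \<partial>\<mu>) \<longlongrightarrow> 0) (at 0)"
proof -
  interpret mu: prob_space \<mu> by (rule mu)
  have Fm'[measurable]: "(\<lambda>(\<gamma>, x). F x \<gamma>) \<in> borel_measurable (\<mu> \<Otimes>\<^sub>M lborel)"
    using measurable_pair_swap[OF Fm] by simp
  have Fsec[measurable]: "(\<lambda>z. F z \<gamma>) \<in> borel_measurable borel" if "\<gamma> \<in> space \<mu>" for \<gamma>
  proof -
    have "(\<lambda>z. F z \<gamma>) \<in> borel_measurable lborel"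
      using measurable_comp[OF measurable_Pair2'[OF that] Fm] by (simp add: comp_def)
    then show ?thesis by simp
  qed
  have ballm[measurable]: "ball (0::'a) r \<in> sets borel" for r by simp
  let ?Na = "\<integral>\<^sup>+y. ennreal (a y) \<partial>lborel"
  let ?K = "\<lambda>\<rho> \<gamma>. \<integral>\<^sup>+z\<in>ball 0 \<rho>. ennreal ((F z \<gamma>)\<^sup>2) \<partial>lborel"
  have LB: "(\<integral>\<^sup>+\<gamma>. ?K \<rho> \<gamma> \<partial>\<mu>) < \<infinity>" for \<rho>
  proof -
    have "(\<integral>\<^sup>+\<gamma>. ?K \<rho> \<gamma> \<partial>\<mu>) \<le> ennreal M * emeasure lborel (ball (0::'a) \<rho>)"
      by (rule loc_bound[OF mu Fm mom]) simp
    also have "\<dots> < \<infinity>"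
      using emeasure_bounded_finite[of "ball (0::'a) \<rho>"] by (simp add: ennreal_mult_less_top)
    finally show ?thesis .
  qed
  show ?thesis
  proof (rule tendsto_at_seqI)
    fix X :: "nat \<Rightarrow> real" assume X: "X \<longlonglongrightarrow> 0"
    then obtain Bd where Bd: "\<And>n. \<bar>X n\<bar> \<le> Bd"
      using convergent_imp_bounded[of X] by (auto simp: bounded_iff convergent_def)
    define \<rho> where "\<rho> = Rl + \<bar>Bd\<bar> * \<bar>Ra\<bar> + 1"
    let ?B = "ball (0::'a) \<rho>"
    have sub: "x + e *\<^sub>R y \<in> ?B" if "x \<in> \<Lambda>" "a y \<noteq> 0" "\<bar>e\<bar> \<le> Bd" for x y :: 'a and e
    proof -
      have "norm (x + e *\<^sub>R y) \<le> norm x + \<bar>e\<bar> * norm y"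
        using norm_triangle_ineq[of x "e *\<^sub>R y"] by simp
      also have "\<dots> \<le> Rl + \<bar>Bd\<bar> * \<bar>Ra\<bar>"
        using Lb[OF that(1)] asupp[OF that(2)] that(3) by (intro add_mono mult_mono) auto
      finally show ?thesis by (simp add: \<rho>_def)
    qed
    have subL: "x \<in> ?B" if "x \<in> \<Lambda>" for x
    proof -
      have "0 \<le> \<bar>Bd\<bar> * \<bar>Ra\<bar>" by simp
      then have "norm x < \<rho>" using Lb[OF that] unfolding \<rho>_def by linarith
      then show ?thesis by simp
    qed
    define q where "q n \<gamma> = (\<integral>\<^sup>+x\<in>\<Lambda>. (\<integral>\<^sup>+y. ennreal (a y * (F (x + X n *\<^sub>R y) \<gamma> - F x \<gamma>)\<^sup>2) \<partial>lborel) \<partial>lborel)" for n \<gamma>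
    have qm[measurable]: "q n \<in> borel_measurable \<mu>" for n
      unfolding q_def by measurable
    have Km[measurable]: "?K \<rho> \<in> borel_measurable \<mu>" by measurable
    have dom: "q n \<gamma> \<le> 4 * (?Na * ?K \<rho> \<gamma>)" if \<gamma>: "\<gamma> \<in> space \<mu>" for n \<gamma>
    proof -
      let ?A = "\<lambda>x y. ennreal (a y * (F (x + X n *\<^sub>R y) \<gamma>)\<^sup>2)"
      let ?C = "\<lambda>x y. ennreal (a y * (F (x + 0 *\<^sub>R y) \<gamma>)\<^sup>2)"
      have "q n \<gamma> \<le> (\<integral>\<^sup>+x\<in>\<Lambda>. (\<integral>\<^sup>+y. 2 * ?A x y + 2 * ?C x y \<partial>lborel) \<partial>lborel)"
        unfolding q_def
      proof (intro nn_integral_mono mult_right_mono order_refl)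
        fix x y :: 'a
        have "a y * (F (x + X n *\<^sub>R y) \<gamma> - F x \<gamma>)\<^sup>2 \<le> a y * (2 * (F (x + X n *\<^sub>R y) \<gamma>)\<^sup>2 + 2 * (F x \<gamma>)\<^sup>2)"
          by (intro mult_left_mono sq_diff_le ann)
        also have "\<dots> = 2 * (a y * (F (x + X n *\<^sub>R y) \<gamma>)\<^sup>2) + 2 * (a y * (F x \<gamma>)\<^sup>2)"
          by (simp add: algebra_simps)
        finally have "ennreal (a y * (F (x + X n *\<^sub>R y) \<gamma> - F x \<gamma>)\<^sup>2) \<le> ennreal (2 * (a y * (F (x + X n *\<^sub>R y) \<gamma>)\<^sup>2) + 2 * (a y * (F x \<gamma>)\<^sup>2))"
          by (rule ennreal_leI)
        also have "\<dots> = 2 * ?A x y + 2 * ?C x y"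
          using ann[of y] by (simp add: ennreal_plus ennreal_mult)
        finally show "ennreal (a y * (F (x + X n *\<^sub>R y) \<gamma> - F x \<gamma>)\<^sup>2) \<le> 2 * ?A x y + 2 * ?C x y" .
      qed simp
      also have "\<dots> = 2 * (\<integral>\<^sup>+x\<in>\<Lambda>. (\<integral>\<^sup>+y. ?A x y \<partial>lborel) \<partial>lborel) + 2 * (\<integral>\<^sup>+x\<in>\<Lambda>. (\<integral>\<^sup>+y. ?C x y \<partial>lborel) \<partial>lborel)"
      proof -
        have "(\<integral>\<^sup>+x\<in>\<Lambda>. (\<integral>\<^sup>+y. 2 * ?A x y + 2 * ?C x y \<partial>lborel) \<partial>lborel)
            = (\<integral>\<^sup>+x. 2 * ((\<integral>\<^sup>+y. ?A x y \<partial>lborel) * indicator \<Lambda> x) + 2 * ((\<integral>\<^sup>+y. ?C x y \<partial>lborel) * indicator \<Lambda> x) \<partial>lborel)"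
        proof (intro nn_integral_cong)
          fix x :: 'a
          have "(\<integral>\<^sup>+y. 2 * ?A x y + 2 * ?C x y \<partial>lborel) = 2 * (\<integral>\<^sup>+y. ?A x y \<partial>lborel) + 2 * (\<integral>\<^sup>+y. ?C x y \<partial>lborel)"
            using \<gamma> by (simp add: nn_integral_add nn_integral_cmult)
          then show "(\<integral>\<^sup>+y. 2 * ?A x y + 2 * ?C x y \<partial>lborel) * indicator \<Lambda> x
              = 2 * ((\<integral>\<^sup>+y. ?A x y \<partial>lborel) * indicator \<Lambda> x) + 2 * ((\<integral>\<^sup>+y. ?C x y \<partial>lborel) * indicator \<Lambda> x)"
            by (simp add: distrib_right mult.assoc)
        qed
        also have "\<dots> = 2 * (\<integral>\<^sup>+x\<in>\<Lambda>. (\<integral>\<^sup>+y. ?A x y \<partial>lborel) \<partial>lborel) + 2 * (\<integral>\<^sup>+x\<in>\<Lambda>. (\<integral>\<^sup>+y. ?C x y \<partial>lborel) \<partial>lborel)"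
          using \<gamma> by (simp add: nn_integral_add nn_integral_cmult)
        finally show ?thesis .
      qed
      also have "\<dots> \<le> 2 * (?Na * ?K \<rho> \<gamma>) + 2 * (?Na * ?K \<rho> \<gamma>)"
      proof (intro add_mono mult_left_mono order_refl)
        show "(\<integral>\<^sup>+x\<in>\<Lambda>. (\<integral>\<^sup>+y. ?A x y \<partial>lborel) \<partial>lborel) \<le> ?Na * ?K \<rho> \<gamma>"
          by (rule shift_bound[where G="\<lambda>z. (F z \<gamma>)\<^sup>2"]) (use \<gamma> sub Bd ann in auto)
        show "(\<integral>\<^sup>+x\<in>\<Lambda>. (\<integral>\<^sup>+y. ?C x y \<partial>lborel) \<partial>lborel) \<le> ?Na * ?K \<rho> \<gamma>"
          by (rule shift_bound[where G="\<lambda>z. (F z \<gamma>)\<^sup>2"]) (use \<gamma> subL ann in auto)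
      qed auto
      also have "\<dots> = 4 * (?Na * ?K \<rho> \<gamma>)" by (rule ennreal_2_2_4)
      finally show ?thesis .
    qed
    have domint: "(\<integral>\<^sup>+\<gamma>. 4 * (?Na * ?K \<rho> \<gamma>) \<partial>\<mu>) < \<infinity>"
      using aint LB[of \<rho>] by (simp add: nn_integral_cmult ennreal_mult_less_top)
    have AEfin: "AE \<gamma> in \<mu>. ?K \<rho> \<gamma> \<noteq> \<infinity>"
      by (rule nn_integral_PInf_AE) (use LB[of \<rho>] in auto)
    have pw: "AE \<gamma> in \<mu>. (\<lambda>n. q n \<gamma>) \<longlonglongrightarrow> 0"
      using AEfin
    proof (rule AE_mp[OF _ AE_I2], intro impI)
      fix \<gamma> assume \<gamma>: "\<gamma> \<in> space \<mu>" and Kfin: "?K \<rho> \<gamma> \<noteq> \<infinity>"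
      define g where "g z = F z \<gamma> * indicator ?B z" for z
      have gm[measurable]: "g \<in> borel_measurable borel"
        unfolding g_def using \<gamma> by measurable
      have g2: "(\<integral>\<^sup>+z. ennreal ((g z)\<^sup>2) \<partial>lborel) = ?K \<rho> \<gamma>"
        unfolding g_def by (intro nn_integral_cong) (auto simp: indicator_def)
      have TCg: "TC g"
        by (rule TC_bounded_supp[OF gm _ bounded_ball[of 0 \<rho>]]) (use g2 Kfin in \<open>auto simp: g_def top.not_eq_extremum\<close>)
      have q_le: "q n \<gamma> \<le> (\<integral>\<^sup>+y. ennreal (a y) * Dtr g (X n *\<^sub>R y) \<partial>lborel)" for n
      proof -
        have "q n \<gamma> = (\<integral>\<^sup>+x\<in>\<Lambda>. (\<integral>\<^sup>+y. ennreal (a y * (g (x + X n *\<^sub>R y) - g x)\<^sup>2) \<partial>lborel) \<partial>lborel)"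
          unfolding q_def
        proof (intro nn_integral_cong)
          fix x :: 'a
          show "(\<integral>\<^sup>+y. ennreal (a y * (F (x + X n *\<^sub>R y) \<gamma> - F x \<gamma>)\<^sup>2) \<partial>lborel) * indicator \<Lambda> x
              = (\<integral>\<^sup>+y. ennreal (a y * (g (x + X n *\<^sub>R y) - g x)\<^sup>2) \<partial>lborel) * indicator \<Lambda> x"
          proof (cases "x \<in> \<Lambda>")
            case True
            have "(\<integral>\<^sup>+y. ennreal (a y * (F (x + X n *\<^sub>R y) \<gamma> - F x \<gamma>)\<^sup>2) \<partial>lborel)
                = (\<integral>\<^sup>+y. ennreal (a y * (g (x + X n *\<^sub>R y) - g x)\<^sup>2) \<partial>lborel)"
            proof (intro nn_integral_cong)
              fix y :: 'a
              show "ennreal (a y * (F (x + X n *\<^sub>R y) \<gamma> - F x \<gamma>)\<^sup>2) = ennreal (a y * (g (x + X n *\<^sub>R y) - g x)\<^sup>2)"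
              proof (cases "a y = 0")
                case False
                then show ?thesis
                  using sub[OF True False Bd[of n]] subL[OF True] by (simp add: g_def)
              qed simp
            qed
            then show ?thesis by simp
          qed simp
        qed
        also have "\<dots> \<le> (\<integral>\<^sup>+y. ennreal (a y) * Dtr g (X n *\<^sub>R y) \<partial>lborel)"
          by (rule diff_bound) (use ann in auto)
        finally show ?thesis .
      qed
      have Dtr0: "Dtr g 0 = 0" by (simp add: Dtr_def)
      have cont: "isCont (Dtr g) 0"
        using TCg unfolding TC_def isCont_def Dtr0 by simp
      have lim2: "(\<lambda>n. \<integral>\<^sup>+y. ennreal (a y) * Dtr g (X n *\<^sub>R y) \<partial>lborel) \<longlonglongrightarrow> (\<integral>\<^sup>+(y::'a). 0 \<partial>lborel)"
      proof (rule nn_integral_dominated_convergence[where w="\<lambda>y. ennreal (a y) * (4 * (\<integral>\<^sup>+z. ennreal ((g z)\<^sup>2) \<partial>lborel))"])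
        show "AE y in lborel. ennreal (a y) * Dtr g (X n *\<^sub>R y) \<le> ennreal (a y) * (4 * (\<integral>\<^sup>+z. ennreal ((g z)\<^sup>2) \<partial>lborel))" for n
          by (intro AE_I2 mult_left_mono Dtr_le gm) auto
        show "(\<integral>\<^sup>+y. ennreal (a y) * (4 * (\<integral>\<^sup>+z. ennreal ((g z)\<^sup>2) \<partial>lborel)) \<partial>lborel) < \<infinity>"
          using aint g2 Kfin by (simp add: nn_integral_multc ennreal_mult_less_top top.not_eq_extremum)
        show "AE y in lborel. (\<lambda>n. ennreal (a y) * Dtr g (X n *\<^sub>R y)) \<longlonglongrightarrow> 0"
        proof (rule AE_I2)
          fix y :: 'a
          have "(\<lambda>n. X n *\<^sub>R y) \<longlonglongrightarrow> 0 *\<^sub>R y"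
            by (intro tendsto_intros X)
          then have "(\<lambda>n. Dtr g (X n *\<^sub>R y)) \<longlonglongrightarrow> Dtr g 0"
            using isCont_tendsto_compose[OF cont] by simp
          then have "(\<lambda>n. ennreal (a y) * Dtr g (X n *\<^sub>R y)) \<longlonglongrightarrow> ennreal (a y) * 0"
            unfolding Dtr0 by (intro ennreal_tendsto_cmult) auto
          then show "(\<lambda>n. ennreal (a y) * Dtr g (X n *\<^sub>R y)) \<longlonglongrightarrow> 0" by simp
        qed
      next
        have "(\<lambda>h. \<integral>\<^sup>+x. ennreal ((g (x + h) - g x)\<^sup>2) \<partial>lborel) \<in> borel_measurable lborel"
          by measurable
        then have Dm[measurable]: "Dtr g \<in> borel_measurable borel"
          by (simp add: Dtr_def[abs_def])
        show "(\<lambda>y. ennreal (a y) * Dtr g (X n *\<^sub>R y)) \<in> borel_measurable lborel" for n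
          by measurable
      qed measurable
      show "(\<lambda>n. q n \<gamma>) \<longlonglongrightarrow> 0"
      proof (rule tendsto_sandwich[of "\<lambda>_. 0" _ _ "\<lambda>n. \<integral>\<^sup>+y. ennreal (a y) * Dtr g (X n *\<^sub>R y) \<partial>lborel"])
        show "(\<lambda>n. \<integral>\<^sup>+y. ennreal (a y) * Dtr g (X n *\<^sub>R y) \<partial>lborel) \<longlonglongrightarrow> 0"
          using lim2 by simp
      qed (use q_le in auto)
    qed
    have "(\<lambda>n. \<integral>\<^sup>+\<gamma>. q n \<gamma> \<partial>\<mu>) \<longlonglongrightarrow> (\<integral>\<^sup>+\<gamma>. 0 \<partial>\<mu>)"
    proof (rule nn_integral_dominated_convergence[where w="\<lambda>\<gamma>. 4 * (?Na * ?K \<rho> \<gamma>)"])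
      show "AE \<gamma> in \<mu>. q n \<gamma> \<le> 4 * (?Na * ?K \<rho> \<gamma>)" for n
        using dom by (auto intro!: AE_I')
    qed (use domint pw in auto)
    then show "(\<lambda>n. \<integral>\<^sup>+\<gamma>. (\<integral>\<^sup>+x\<in>\<Lambda>. (\<integral>\<^sup>+y.
             ennreal (a y * (F (x + X n *\<^sub>R y) \<gamma> - F x \<gamma>)\<^sup>2) \<partial>lborel) \<partial>lborel) \<partial>\<mu>) \<longlonglongrightarrow> 0"
      by (simp add: q_def)
  qed
qed


lemma powr_sq_le:
  fixes r \<alpha> :: real
  assumes "0 \<le> r" "0 < \<alpha>" "\<alpha> \<le> 1"
  shows "(r powr \<alpha>)\<^sup>2 \<le> 1 + r\<^sup>2"
proof (cases "r \<le> 1")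
  case True
  have "r powr \<alpha> \<le> 1" using assms True by (intro powr_le1) auto
  moreover have "0 \<le> r powr \<alpha>" by simp
  ultimately have "(r powr \<alpha>)\<^sup>2 \<le> 1\<^sup>2" by (intro power_mono) auto
  then show ?thesis by (simp add: add_increasing2)
next
  case False
  have "r powr \<alpha> \<le> r powr 1" using assms False by (intro powr_mono) auto
  then have "r powr \<alpha> \<le> r" using assms by simp
  moreover have "0 \<le> r powr \<alpha>" by simp
  ultimately have "(r powr \<alpha>)\<^sup>2 \<le> r\<^sup>2" by (intro power_mono) auto
  then show ?thesis by simp
qed

lemma kcov_diag_const:
  fixes \<kappa> :: "'a::euclidean_space \<Rightarrow> real"
  assumes [measurable]: "\<kappa> \<in> borel_measurable borel"
  shows "kcov \<kappa> x x = kcov \<kappa> 0 0"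
proof -
  have "kcov \<kappa> x x = (LINT z|lborel. \<kappa> (x - z) * \<kappa> (x - z))" by (simp add: kcov_def)
  also have "\<dots> = (LINT z|distr lborel borel ((+) x). \<kappa> (x - z) * \<kappa> (x - z))"
    by (simp add: lborel_distr_plus)
  also have "\<dots> = (LINT z|lborel. \<kappa> (x - (x + z)) * \<kappa> (x - (x + z)))"
    by (subst integral_distr) auto
  also have "\<dots> = kcov \<kappa> 0 0" by (simp add: kcov_def)
  finally show ?thesis .
qed

lemma gaussian_char1:
  assumes "gaussian_field P Y k"
  shows "char (distr P borel (\<lambda>\<omega>. c * Y x \<omega>)) t = complex_of_real (exp (- (c * c * k x x) * t\<^sup>2 / 2))"
proof -
  have H: "\<forall>(n::nat) (xs::nat \<Rightarrow> _) (c::nat \<Rightarrow> real) t.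
        char (distr P borel (\<lambda>\<omega>. \<Sum>i<n. c i * Y (xs i) \<omega>)) t =
        complex_of_real (exp (- (\<Sum>i<n. \<Sum>j<n. c i * c j * k (xs i) (xs j)) * t\<^sup>2 / 2))"
    using assms unfolding gaussian_field_def by blast
  from H[rule_format, where n="Suc 0" and xs="\<lambda>_. x" and c="\<lambda>_. c" and t=t] show ?thesis by simp
qed

lemma cox_marginal:
  assumes cj: "cox_joint P Y Pt" and A: "A \<in> sets P"
  shows "emeasure Pt (A \<times> space Gamma) = emeasure P A"
proof -
  have H: "\<forall>A (m::nat) (B::nat \<Rightarrow> _ set) (n::nat \<Rightarrow> nat).
        A \<in> sets P \<longrightarrow> (\<forall>i<m. B i \<in> sets lborel \<and> bounded (B i)) \<longrightarrow>
        disjoint_family_on B {..<m} \<longrightarrow>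
        emeasure Pt (A \<times> {\<gamma>\<in>space Gamma. \<forall>i<m. card (\<gamma> \<inter> B i) = n i}) =
        (\<integral>\<^sup>+\<omega>\<in>A. ennreal (\<Prod>i<m. poisson_prob (LINT x:B i|lborel. (Y x \<omega>)\<^sup>2) (n i)) \<partial>P)"
    using cj unfolding cox_joint_def by blast
  from H[rule_format, where A=A and m=0 and B="\<lambda>_. {}" and n="\<lambda>_. 0"] A show ?thesis
    by (simp add: disjoint_family_on_def)
qed

theorem lemma4p1:
  fixes \<kappa> :: "'a::euclidean_space \<Rightarrow> real"
    and a :: "'a \<Rightarrow> real"
    and P :: "'w measure"
    and Y :: "'a \<Rightarrow> 'w \<Rightarrow> real"
    and Pt :: "('w \<times> 'a set) measure"
    and r :: "'a \<Rightarrow> 'a set \<Rightarrow> real"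
    and \<Lambda> :: "'a set"
    and \<alpha> :: real
  assumes "kernel_ok \<kappa>"
    and "weight_ok a"
    and "gaussian_field P Y (kcov \<kappa>)"
    and "cox_joint P Y Pt"
    and "papangelou Pt Y r"
    and "\<Lambda> \<in> sets borel" and "bounded \<Lambda>"
    and "0 < \<alpha>" and "\<alpha> \<le> 1"
  shows "(\<forall>\<epsilon>::real. (\<integral>\<^sup>+\<gamma>. (\<integral>\<^sup>+x\<in>\<Lambda>. (\<integral>\<^sup>+y.
             ennreal (a y * (r (x + \<epsilon> *\<^sub>R y) \<gamma> powr \<alpha>)\<^sup>2) \<partial>lborel) \<partial>lborel)
           \<partial>(distr Pt Gamma snd)) < \<infinity>)
       \<and> ((\<lambda>\<epsilon>::real. \<integral>\<^sup>+\<gamma>. (\<integral>\<^sup>+x\<in>\<Lambda>. (\<integral>\<^sup>+y.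
             ennreal (a y * (r (x + \<epsilon> *\<^sub>R y) \<gamma> powr \<alpha> - r x \<gamma> powr \<alpha>)\<^sup>2) \<partial>lborel) \<partial>lborel)
           \<partial>(distr Pt Gamma snd)) \<longlongrightarrow> 0) (at 0)"
proof -
  note gf = assms(3)
  have P: "prob_space P" using gf by (simp add: gaussian_field_def)
  interpret P: prob_space P by (rule P)
  have Yj[measurable]: "(\<lambda>(x, \<omega>). Y x \<omega>) \<in> borel_measurable (lborel \<Otimes>\<^sub>M P)"
    using gf by (simp add: gaussian_field_def)
  have Ym[measurable]: "Y x \<in> borel_measurable P" for x
    using measurable_comp[OF measurable_Pair1'[of x lborel P] Yj] by (simp add: comp_def)
  have setsPt: "sets Pt = sets (P \<Otimes>\<^sub>M Gamma)"
    using assms(4) by (simp add: cox_joint_def)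
  have spacePt: "space Pt = space P \<times> space Gamma"
    using sets_eq_imp_space_eq[OF setsPt] by (simp add: space_pair_measure)
  have fstm[measurable]: "fst \<in> measurable Pt P"
    using measurable_cong_sets[OF setsPt refl] measurable_fst by blast
  have sndm[measurable]: "snd \<in> measurable Pt Gamma"
    using measurable_cong_sets[OF setsPt refl] measurable_snd by blast
  have margP: "distr Pt P fst = P"
  proof (rule measure_eqI)
    show "sets (distr Pt P fst) = sets P" by simp
    fix A assume "A \<in> sets (distr Pt P fst)"
    then have A: "A \<in> sets P" by simp
    have "fst -` A \<inter> space Pt = A \<times> space Gamma"
      using sets.sets_into_space[OF A] by (auto simp: spacePt)
    then show "emeasure (distr Pt P fst) A = emeasure P A"
      using cox_marginal[OF assms(4) A] A by (simp add: emeasure_distr)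
  qed
  have PtP: "prob_space Pt"
  proof (rule prob_spaceI)
    show "emeasure Pt (space Pt) = 1"
      using cox_marginal[OF assms(4) sets.top] by (simp add: spacePt P.emeasure_space_1)
  qed
  define \<mu> where "\<mu> = distr Pt Gamma snd"
  have mu: "prob_space \<mu>"
    unfolding \<mu>_def by (rule prob_space.prob_space_distr[OF PtP sndm])
  have setsmu: "sets \<mu> = sets Gamma" by (simp add: \<mu>_def)
  have rj[measurable]: "(\<lambda>(x, \<gamma>). r x \<gamma>) \<in> borel_measurable (lborel \<Otimes>\<^sub>M Gamma)"
    and rnn: "\<And>x \<gamma>. 0 \<le> r x \<gamma>"
    and rAE: "AE x in lborel. \<forall>S\<in>sets Gamma.
        (\<integral>\<^sup>+p. indicator S (snd p) * ennreal ((Y x (fst p))\<^sup>2) \<partial>Pt) =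
        (\<integral>\<^sup>+p. indicator S (snd p) * ennreal (r x (snd p)) \<partial>Pt)"
    using assms(5) by (simp_all add: papangelou_def)
  have rsec[measurable]: "r x \<in> borel_measurable Gamma" for x
    using measurable_comp[OF measurable_Pair1'[of x lborel Gamma] rj] by (simp add: comp_def)
  have Fm: "(\<lambda>(x, \<gamma>). r x \<gamma> powr \<alpha>) \<in> borel_measurable (lborel \<Otimes>\<^sub>M \<mu>)"
  proof -
    have "(\<lambda>(x, \<gamma>). r x \<gamma> powr \<alpha>) \<in> borel_measurable (lborel \<Otimes>\<^sub>M Gamma)" by measurable
    moreover have "sets (lborel \<Otimes>\<^sub>M \<mu>) = sets (lborel \<Otimes>\<^sub>M Gamma)"
      by (rule sets_pair_measure_cong) (simp_all add: setsmu)
    ultimately show ?thesis using measurable_cong_sets by blast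
  qed
  have \<kappa>m[measurable]: "\<kappa> \<in> borel_measurable borel"
    using assms(1) by (simp add: kernel_ok_def sq_int_def)
  define k0 where "k0 = kcov \<kappa> 0 0"
  have k0nn: "0 \<le> k0"
    unfolding k0_def kcov_def by (intro integral_nonneg_AE) auto
  have mom4: "(\<integral>\<^sup>+\<omega>. ennreal ((Y x \<omega>) ^ 4) \<partial>P) = ennreal (3 * k0\<^sup>2)" for x
  proof -
    have "(\<integral>\<^sup>+\<omega>. ennreal ((Y x \<omega>) ^ 4) \<partial>P) = ennreal (3 * (kcov \<kappa> x x)\<^sup>2)"
      by (rule gauss_fourth[OF P Ym gaussian_char1[OF gf]]) (use k0nn kcov_diag_const[OF \<kappa>m, of x] in \<open>simp add: k0_def\<close>)
    then show ?thesis using kcov_diag_const[OF \<kappa>m, of x] by (simp add: k0_def)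
  qed
  have mom2: "AE x in lborel. (\<integral>\<^sup>+\<gamma>. ennreal ((r x \<gamma>)\<^sup>2) \<partial>\<mu>) \<le> ennreal (3 * k0\<^sup>2)"
    using rAE
  proof eventually_elim
    case (elim x)
    have fin: "emeasure Pt (space Pt) < \<infinity>"
      using prob_space.emeasure_space_1[OF PtP] by simp
    have "(\<integral>\<^sup>+p. ennreal ((r x (snd p))\<^sup>2) \<partial>Pt) \<le> (\<integral>\<^sup>+p. ennreal (((Y x (fst p))\<^sup>2)\<^sup>2) \<partial>Pt)"
      by (rule cond_sq_bound[where s=snd and G=Gamma and V="\<lambda>p. (Y x (fst p))\<^sup>2" and R="r x"])
         (use elim rnn fin in auto)
    also have "\<dots> = (\<integral>\<^sup>+p. ennreal ((Y x (fst p)) ^ 4) \<partial>Pt)"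
      by (intro nn_integral_cong) (simp add: power_mult[symmetric])
    also have "\<dots> = (\<integral>\<^sup>+\<omega>. ennreal ((Y x \<omega>) ^ 4) \<partial>distr Pt P fst)"
      by (subst nn_integral_distr) auto
    also have "\<dots> = ennreal (3 * k0\<^sup>2)"
      unfolding margP by (rule mom4)
    also have "(\<integral>\<^sup>+p. ennreal ((r x (snd p))\<^sup>2) \<partial>Pt) = (\<integral>\<^sup>+\<gamma>. ennreal ((r x \<gamma>)\<^sup>2) \<partial>\<mu>)"
      unfolding \<mu>_def by (subst nn_integral_distr) auto
    finally show ?case .
  qed
  have momF: "AE x in lborel. (\<integral>\<^sup>+\<gamma>. ennreal ((r x \<gamma> powr \<alpha>)\<^sup>2) \<partial>\<mu>) \<le> ennreal (1 + 3 * k0\<^sup>2)"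
    using mom2
  proof eventually_elim
    case (elim x)
    interpret mu: prob_space \<mu> by (rule mu)
    have [measurable]: "r x \<in> borel_measurable \<mu>"
      using rsec[of x] measurable_cong_sets[OF setsmu refl] by blast
    have "(\<integral>\<^sup>+\<gamma>. ennreal ((r x \<gamma> powr \<alpha>)\<^sup>2) \<partial>\<mu>) \<le> (\<integral>\<^sup>+\<gamma>. 1 + ennreal ((r x \<gamma>)\<^sup>2) \<partial>\<mu>)"
    proof (intro nn_integral_mono)
      fix \<gamma>
      have "ennreal ((r x \<gamma> powr \<alpha>)\<^sup>2) \<le> ennreal (1 + (r x \<gamma>)\<^sup>2)"
        using powr_sq_le[OF rnn assms(8,9)] by (rule ennreal_leI)
      then show "ennreal ((r x \<gamma> powr \<alpha>)\<^sup>2) \<le> 1 + ennreal ((r x \<gamma>)\<^sup>2)"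
        by (simp add: ennreal_plus)
    qed
    also have "\<dots> = 1 + (\<integral>\<^sup>+\<gamma>. ennreal ((r x \<gamma>)\<^sup>2) \<partial>\<mu>)"
      by (subst nn_integral_add) (auto simp: mu.emeasure_space_1)
    also have "\<dots> \<le> 1 + ennreal (3 * k0\<^sup>2)"
      using elim by (intro add_left_mono)
    also have "\<dots> = ennreal (1 + 3 * k0\<^sup>2)"
      by (simp add: ennreal_plus)
    finally show ?case .
  qed
  have wa: "a \<in> borel_measurable lborel" "\<And>x. a x \<ge> 0" "integrable lborel a" "bounded {x. a x \<noteq> 0}"
    using assms(2) by (auto simp: weight_ok_def)
  have am: "a \<in> borel_measurable borel" using wa(1) by simp
  have aint: "(\<integral>\<^sup>+y. ennreal (a y) \<partial>lborel) < \<infinity>"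
    using wa(3) wa(2) by (simp add: integrable_iff_bounded)
  obtain Ra where Ra: "\<And>y. a y \<noteq> 0 \<Longrightarrow> norm y \<le> Ra"
    using wa(4) unfolding bounded_iff by auto
  obtain Rl where Rl: "\<And>x. x \<in> \<Lambda> \<Longrightarrow> norm x \<le> Rl"
    using assms(7) unfolding bounded_iff by auto
  note c1 = main_abstract[where F="\<lambda>x \<gamma>. r x \<gamma> powr \<alpha>", OF mu Fm momF am wa(2) aint Ra assms(6) Rl]
  note c2 = main_lim[where F="\<lambda>x \<gamma>. r x \<gamma> powr \<alpha>", OF mu Fm momF am wa(2) aint Ra assms(6) Rl]
  show ?thesis
    using c1 c2 unfolding \<mu>_def by simp
qed


end
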